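(* In the setting described in the context, assume that the unforced system $(X,\mathrm{PC},\phi_0)$ is UGES. Then for every $1\le p\le+\infty$ and $\sigma\in\mathrm{PC}$ the input-to-state map $u\mapsto\phi_u(\cdot,0,\sigma)$ is well defined from $L^p(\mathbb{R}_+,U)$ to $L^p(\mathbb{R}_+,X)$, and there exists $c_p>0$ (independent of $\sigma$) such that $$\|\phi_u(\cdot,0,\sigma)\|_{L^p(\mathbb{R}_+,X)}\le c_p\|u\|_{L^p(\mathbb{R}_+,U)}\quad\forall u\in L^p(\mathbb{R}_+,U),\ \forall\sigma\in\mathrm{PC}.$$
   Context: $X,U$ are Banach spaces; $A$ is the infinitesimal generator of a $C_0$-semigroup $(T_t)_{t\ge0}$ of bounded linear operators on $X$. $\mathcal{Q}$ is a nonempty set and $\mathrm{PC}$ is the set of piecewise constant $\sigma:\mathbb{R}_+\to\mathcal{Q}$. For $q\in\mathcal{Q}$, $f_q:X\times U\to X$ is Lipschitz continuous with Lipschitz constant $L_f>0$ independent of $q$, and $f_q(0,0)=0$. For $x_0\in X$, $\sigma\in\mathrm{PC}$ and $u\in L^p(\mathbb{R}_+,U)$, $\phi_u(\cdot,x_0,\sigma)$ denotes the (mild) solution on $\mathbb{R}_+$ of $\dot x(t)=Ax(t)+f_{\sigma(t)}(x(t),u(t))$, $x(0)=x_0$, i.e. the continuous function with $\phi_u(t,x_0,\sigma)=T_tx_0+\int_0^tT_{t-s}f_{\sigma(s)}(\phi_u(s,x_0,\sigma),u(s))ds$; $\phi_0$ denotes the case $u\equiv0$. $(X,\mathrm{PC},\phi_0)$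 is UGES if there exist $M,\lambda>0$ with $\|\phi_0(t,x,\sigma)\|\le Me^{-\lambda t}\|x\|$ for all $t\ge0$, $x\in X$, $\sigma\in\mathrm{PC}$. *)

theory Defs
  imports "HOL-Analysis.Analysis" "HOL-Probability.Essential_Supremum"
begin

text \<open>C0-semigroup of bounded linear operators on a Banach space (the generator A is
  determined by T and plays no further role in the statement).\<close>
definition C0_semigroup :: "(real \<Rightarrow> ('x::banach \<Rightarrow>\<^sub>L 'x)) \<Rightarrow> bool" where
  "C0_semigroup T \<longleftrightarrow>
     T 0 = id_blinfun \<and>
     (\<forall>t s. 0 \<le> t \<longrightarrow> 0 \<le> s \<longrightarrow> T (t + s) = T t o\<^sub>L T s) \<and>
     (\<forall>x. ((\<lambda>t. blinfun_apply (T t) x) \<longlongrightarrow> x) (at_right 0))"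

definition piecewise_constant :: "(real \<Rightarrow> 'q) \<Rightarrow> bool" where
  "piecewise_constant \<sigma> \<longleftrightarrow>
     (\<exists>S. S \<subseteq> {0..} \<and> (\<forall>b. finite (S \<inter> {0..b})) \<and>
          (\<forall>a b. 0 \<le> a \<longrightarrow> a < b \<longrightarrow> S \<inter> {a<..<b} = {} \<longrightarrow>
                 (\<forall>s\<in>{a<..<b}. \<forall>t\<in>{a<..<b}. \<sigma> s = \<sigma> t)))"

definition PC :: "(real \<Rightarrow> 'q) set" where
  "PC = {\<sigma>. piecewise_constant \<sigma>}"

definition Lp_norm :: "ennreal \<Rightarrow> (real \<Rightarrow> 'a::real_normed_vector) \<Rightarrow> ennreal" where
  "Lp_norm p f =
     (if p = \<infinity> then esssup (lebesgue_on {0..}) (\<lambda>t. ennreal (norm (f t)))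
      else (let I = (\<integral>\<^sup>+ t. ennreal (norm (f t) powr enn2real p) \<partial>lebesgue_on {0..})
            in if I = \<infinity> then \<infinity> else ennreal (enn2real I powr (1 / enn2real p))))"

definition Lp :: "ennreal \<Rightarrow> (real \<Rightarrow> 'a::real_normed_vector) set" where
  "Lp p = {f. f \<in> borel_measurable (lebesgue_on {0..}) \<and> Lp_norm p f < \<infinity>}"

text \<open>Mild solution on R_+ of x' = A x + f_{\<sigma>(t)}(x, u(t)), x(0) = x0.\<close>
definition mild_solution ::
  "(real \<Rightarrow> ('x::banach \<Rightarrow>\<^sub>L 'x)) \<Rightarrow> ('q \<Rightarrow> 'x \<Rightarrow> 'u \<Rightarrow> 'x) \<Rightarrow>
   (real \<Rightarrow> 'q) \<Rightarrow> (real \<Rightarrow> 'u) \<Rightarrow> 'x \<Rightarrow> (real \<Rightarrow> 'x) \<Rightarrow> bool" where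
  "mild_solution T f \<sigma> u x0 \<phi> \<longleftrightarrow>
     continuous_on {0..} \<phi> \<and>
     (\<forall>t\<ge>0. ((\<lambda>s. blinfun_apply (T (t - s)) (f (\<sigma> s) (\<phi> s) (u s)))
               has_integral (\<phi> t - blinfun_apply (T t) x0)) {0..t})"

definition UGES :: "(real \<Rightarrow> ('x::banach \<Rightarrow>\<^sub>L 'x)) \<Rightarrow> ('q \<Rightarrow> 'x \<Rightarrow> 'u::real_normed_vector \<Rightarrow> 'x) \<Rightarrow> bool" where
  "UGES T f \<longleftrightarrow>
     (\<exists>M lam. M > 0 \<and> lam > 0 \<and>
        (\<forall>\<sigma>\<in>PC. \<forall>x \<phi>. mild_solution T f \<sigma> (\<lambda>_. 0) x \<phi> \<longrightarrow>
            (\<forall>t\<ge>0. norm (\<phi> t) \<le> M * exp (- lam * t) * norm x)))"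

end

theory Submission
  imports Defs
begin

lemma ubp:
  fixes A :: "nat \<Rightarrow> ('a::banach \<Rightarrow>\<^sub>L 'b::real_normed_vector)"
  assumes pw: "\<And>x. \<exists>B. \<forall>n. norm (A n x) \<le> B"
  shows "\<exists>B. \<forall>n. norm (A n) \<le> B"
proof -
  define E where "E k = {x. \<forall>n. norm (A n x) \<le> real k}" for k :: nat
  have clE: "closed (E k)" for k
    unfolding E_def Collect_all_eq
    by (intro closed_INT ballI closed_Collect_le continuous_intros)
  have UE: "\<Union>(range E) = UNIV"
  proof safe
    fix x :: 'a
    obtain B where "\<forall>n. norm (A n x) \<le> B" using pw by blast
    moreover obtain k :: nat where "B \<le> real k" using real_arch_simple by blast
    ultimately have "x \<in> E k" unfolding E_def by (auto intro: order_trans)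
    then show "x \<in> \<Union>(range E)" by blast
  qed simp
  have "\<exists>k. interior (E k) \<noteq> {}"
  proof (rule ccontr)
    assume "\<not> ?thesis"
    then have "euclidean interior_of \<Union>(range E) = {}"
      using clE by (intro Baire_category_alt) (auto simp: completely_metrizable_space_euclidean)
    then show False using UE by simp
  qed
  then obtain k x0 where "x0 \<in> interior (E k)" by blast
  then obtain r where r: "r > 0" "ball x0 r \<subseteq> E k"
    using open_contains_ball by (metis interior_subset open_interior subset_trans)
  have "norm (A n) \<le> 4 * real k / r" for n
  proof (rule norm_blinfun_bound)
    show "0 \<le> 4 * real k / r" using r by auto
    fix x :: 'a
    show "norm (A n x) \<le> 4 * real k / r * norm x"
    proof (cases "x = 0")
      case True then show ?thesis by simp
    next
      case False
      define y where "y = (r / (2 * norm x)) *\<^sub>R x"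
      have ny: "norm y = r / 2" using False r unfolding y_def by auto
      have "x0 + y \<in> ball x0 r" "x0 \<in> ball x0 r" using r ny by (auto simp: dist_norm)
      then have "x0 + y \<in> E k" "x0 \<in> E k" using r(2) by auto
      then have "norm (A n (x0 + y)) \<le> real k" "norm (A n x0) \<le> real k" unfolding E_def by auto
      moreover have "A n y = A n (x0 + y) - A n x0" by (simp add: blinfun.add_right)
      then have "norm (A n y) \<le> norm (A n (x0 + y)) + norm (A n x0)"
        by (metis norm_triangle_ineq4)
      ultimately have "norm (A n y) \<le> 2 * real k" by linarith
      moreover have "A n y = (r / (2 * norm x)) *\<^sub>R A n x" unfolding y_def by (simp add: blinfun.scaleR_right)
      ultimately have "(r / (2 * norm x)) * norm (A n x) \<le> 2 * real k" using r False by simp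
      then show ?thesis using r False by (simp add: field_simps)
    qed
  qed
  then show ?thesis by blast
qed

lemma sg_id: "C0_semigroup T \<Longrightarrow> T 0 = id_blinfun" by (simp add: C0_semigroup_def)
lemma sg_add: "C0_semigroup T \<Longrightarrow> 0 \<le> t \<Longrightarrow> 0 \<le> s \<Longrightarrow> T (t + s) = T t o\<^sub>L T s"
  by (simp add: C0_semigroup_def)
lemma sg_right: "C0_semigroup T \<Longrightarrow> ((\<lambda>t. blinfun_apply (T t) x) \<longlongrightarrow> x) (at_right 0)"
  by (simp add: C0_semigroup_def)

lemma sg_right_eps:
  assumes "C0_semigroup T" "e > 0"
  shows "\<exists>d>0. \<forall>t. 0 \<le> t \<longrightarrow> t < d \<longrightarrow> norm (T t x - x) < e"
proof -
  have "eventually (\<lambda>t. dist (T t x) x < e) (at_right 0)"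
    using tendstoD[OF sg_right[OF assms(1)] assms(2)] by blast
  then obtain b where b: "b > 0" "\<And>t. t > 0 \<Longrightarrow> t < b \<Longrightarrow> dist (T t x) x < e"
    unfolding eventually_at_right_field by auto
  show ?thesis
  proof (intro exI[of _ b] conjI allI impI)
    fix t :: real assume "0 \<le> t" "t < b"
    show "norm (T t x - x) < e"
    proof (cases "t = 0")
      case True then show ?thesis using sg_id[OF assms(1)] assms(2) by simp
    next
      case False then show ?thesis using b \<open>0 \<le> t\<close> \<open>t < b\<close> by (auto simp: dist_norm)
    qed
  qed (use b in auto)
qed

lemma sg_local_bound:
  assumes sg: "C0_semigroup T"
  shows "\<exists>d>0. \<exists>K. \<forall>t. 0 \<le> t \<and> t \<le> d \<longrightarrow> norm (T t) \<le> K"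
proof (rule ccontr)
  assume neg: "\<not> ?thesis"
  have "\<forall>n::nat. \<exists>t. 0 \<le> t \<and> t \<le> 1 / (real n + 1) \<and> norm (T t) > real n"
  proof
    fix n :: nat
    have pos: "1 / (real n + 1) > 0" by simp
    then have "\<not> (\<forall>t. 0 \<le> t \<and> t \<le> 1 / (real n + 1) \<longrightarrow> norm (T t) \<le> real n)"
      using neg by blast
    then show "\<exists>t. 0 \<le> t \<and> t \<le> 1 / (real n + 1) \<and> norm (T t) > real n" by (auto simp: not_le)
  qed
  then obtain tn where tn: "\<And>n. 0 \<le> tn n" "\<And>n. tn n \<le> 1 / (real n + 1)" "\<And>n. norm (T (tn n)) > real n"
    by metis
  have conv: "(\<lambda>n. T (tn n) x) \<longlonglongrightarrow> x" for x
  proof (rule LIMSEQ_I)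
    fix e :: real assume "e > 0"
    then obtain d where d: "d > 0" "\<And>t. 0 \<le> t \<Longrightarrow> t < d \<Longrightarrow> norm (T t x - x) < e"
      using sg_right_eps[OF sg] by blast
    obtain N :: nat where N: "1 / d < real N" using reals_Archimedean2 by blast
    show "\<exists>N. \<forall>n\<ge>N. norm (T (tn n) x - x) < e"
    proof (intro exI[of _ N] allI impI)
      fix n assume "N \<le> n"
      have "1 / (real n + 1) < d"
        using N \<open>N \<le> n\<close> d(1) by (simp add: field_simps) (smt (verit, best) of_nat_le_iff mult_left_mono)
      then show "norm (T (tn n) x - x) < e" using tn d by (meson le_less_trans)
    qed
  qed
  have "\<exists>B. \<forall>n. norm (T (tn n) x) \<le> B" for x
  proof -
    have "Bseq (\<lambda>n. T (tn n) x)" using conv[of x] by (intro convergent_imp_Bseq convergentI)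
    then show ?thesis unfolding Bseq_def by blast
  qed
  then obtain B where "\<forall>n. norm (T (tn n)) \<le> B" using ubp[of "\<lambda>n. T (tn n)"] by blast
  moreover obtain n :: nat where "B < real n" using reals_Archimedean2 by blast
  ultimately show False using tn(3)[of n] by (meson less_trans not_le)
qed

lemma sg_exp_bound:
  assumes sg: "C0_semigroup T"
  shows "\<exists>K \<omega>. K \<ge> 1 \<and> \<omega> \<ge> 0 \<and> (\<forall>t\<ge>0. norm (T t) \<le> K * exp (\<omega> * t))"
proof -
  obtain d K0 where d: "d > 0" and K0: "\<And>t. 0 \<le> t \<Longrightarrow> t \<le> d \<Longrightarrow> norm (T t) \<le> K0"
    using sg_local_bound[OF sg] by blast
  define K where "K = max 1 K0"
  have K1: "K \<ge> 1" and KK: "\<And>t. 0 \<le> t \<Longrightarrow> t \<le> d \<Longrightarrow> norm (T t) \<le> K"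
    using K0 unfolding K_def by (auto simp: le_max_iff_disj)
  have ind: "\<forall>t. 0 \<le> t \<and> t \<le> (real n + 1) * d \<longrightarrow> norm (T t) \<le> K ^ (n + 1)" for n
  proof (induction n)
    case 0 then show ?case using KK by simp
  next
    case (Suc n)
    show ?case
    proof (intro allI impI)
      fix t assume t: "0 \<le> t \<and> t \<le> (real (Suc n) + 1) * d"
      show "norm (T t) \<le> K ^ (Suc n + 1)"
      proof (cases "t \<le> (real n + 1) * d")
        case True
        then have "norm (T t) \<le> K ^ (n + 1)" using Suc t by blast
        also have "\<dots> \<le> K ^ (Suc n + 1)" using K1 by (intro power_increasing) auto
        finally show ?thesis .
      next
        case False
        then have t1: "0 \<le> t - d" "t - d \<le> (real n + 1) * d" using t d
          by (auto simp: algebra_simps) (smt (verit) mult_nonneg_nonneg of_nat_0_le_iff)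
        have "T t = T d o\<^sub>L T (t - d)" using sg_add[OF sg, of d "t - d"] t1 d by simp
        then have "norm (T t) \<le> norm (T d) * norm (T (t - d))"
          by (simp add: norm_blinfun_compose)
        also have "\<dots> \<le> K * K ^ (n + 1)"
          using KK[of d] d Suc t1 K1 by (intro mult_mono) auto
        finally show ?thesis by simp
      qed
    qed
  qed
  define \<omega> where "\<omega> = ln K / d"
  have om: "\<omega> \<ge> 0" unfolding \<omega>_def using K1 d by auto
  have "norm (T t) \<le> K * exp (\<omega> * t)" if t: "t \<ge> 0" for t
  proof -
    define n where "n = nat \<lfloor>t / d\<rfloor>"
    have n1: "real n \<le> t / d" using t d unfolding n_def by simp
    have n2: "t \<le> (real n + 1) * d" using t d unfolding n_def
      by (smt (verit, ccfv_SIG) divide_le_eq floor_correct le_nat_floor nat_le_0 of_nat_nat real_of_int_floor_add_one_gt zero_le_floor divide_nonneg_pos pos_divide_less_eq)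
    have "norm (T t) \<le> K ^ (n + 1)" using ind t n2 by blast
    also have "\<dots> = K * exp (real n * ln K)" using K1 by (simp add: exp_of_nat_mult)
    also have "\<dots> \<le> K * exp (\<omega> * t)"
    proof -
      have "real n * ln K \<le> (t / d) * ln K" using n1 K1 by (intro mult_right_mono) auto
      then have "real n * ln K \<le> \<omega> * t" unfolding \<omega>_def by (simp add: mult.commute)
      then show ?thesis using K1 by simp
    qed
    finally show ?thesis .
  qed
  then show ?thesis using K1 om by blast
qed

locale sgb =
  fixes T :: "real \<Rightarrow> ('x::banach \<Rightarrow>\<^sub>L 'x)" and K \<omega> :: real
  assumes sg: "C0_semigroup T" and K1: "K \<ge> 1" and om: "\<omega> \<ge> 0"
    and bnd: "\<And>t. t \<ge> 0 \<Longrightarrow> norm (T t) \<le> K * exp (\<omega> * t)"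
begin

lemma bnd_le: "0 \<le> t \<Longrightarrow> t \<le> N \<Longrightarrow> norm (T t) \<le> K * exp (\<omega> * N)"
  using bnd[of t] K1 om by (smt (verit) exp_le_cancel_iff mult_left_mono)

lemma bnd_apply: "0 \<le> t \<Longrightarrow> t \<le> N \<Longrightarrow> norm (T t y) \<le> K * exp (\<omega> * N) * norm y"
  using bnd_le[of t N] norm_blinfun[of "T t" y]
  by (meson mult_right_mono norm_ge_zero order_trans)

lemma T_add_apply: "0 \<le> t \<Longrightarrow> 0 \<le> s \<Longrightarrow> T (t + s) y = T t (T s y)"
  using sg_add[OF sg, of t s] by simp

lemma T0_apply[simp]: "T 0 y = y"
  using sg_id[OF sg] by simp

lemma strong_cont: "continuous_on {0..} (\<lambda>t. T t x)"
  unfolding continuous_on_iff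
proof (intro ballI allI impI)
  fix t0 e :: real assume t0: "t0 \<in> {0..}" and e: "e > 0"
  define C0 where "C0 = K * exp (\<omega> * t0)"
  have C0: "C0 > 0" unfolding C0_def using K1 by simp
  obtain d where d: "d > 0" "\<And>t. 0 \<le> t \<Longrightarrow> t < d \<Longrightarrow> norm (T t x - x) < e / C0"
    using sg_right_eps[OF sg, of "e / C0" x] e C0 by auto
  show "\<exists>d>0. \<forall>t\<in>{0..}. dist t t0 < d \<longrightarrow> dist (T t x) (T t0 x) < e"
  proof (intro exI[of _ d] conjI ballI impI)
    fix t :: real assume t: "t \<in> {0..}" "dist t t0 < d"
    show "dist (T t x) (T t0 x) < e"
    proof (cases "t0 \<le> t")
      case True
      have "T t x = T t0 (T (t - t0) x)" using T_add_apply[of t0 "t - t0" x] True t0 by simp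
      then have "T t x - T t0 x = T t0 (T (t - t0) x - x)" by (simp add: blinfun.diff_right)
      moreover have "norm (T t0 (T (t - t0) x - x)) \<le> C0 * norm (T (t - t0) x - x)"
        using bnd_apply[of t0 t0] t0 unfolding C0_def by auto
      moreover have "norm (T (t - t0) x - x) < e / C0" using d True t by (auto simp: dist_real_def)
      ultimately show ?thesis using C0 by (simp add: dist_norm) (smt (verit) mult.commute pos_less_divide_eq)
    next
      case False
      have "T t0 x = T t (T (t0 - t) x)" using T_add_apply[of t "t0 - t" x] False t by simp
      then have "T t x - T t0 x = T t (x - T (t0 - t) x)" by (simp add: blinfun.diff_right)
      moreover have "norm (T t (x - T (t0 - t) x)) \<le> C0 * norm (x - T (t0 - t) x)"
        using bnd_apply[of t t0] t False unfolding C0_def by auto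
      moreover have "norm (x - T (t0 - t) x) < e / C0" using d False t
        by (auto simp: dist_real_def norm_minus_commute)
      ultimately show ?thesis using C0 by (simp add: dist_norm) (smt (verit) mult.commute pos_less_divide_eq)
    qed
  qed (use d in auto)
qed

lemma joint_cont:
  assumes ca: "continuous_on A a" and a0: "\<And>s. s \<in> A \<Longrightarrow> 0 \<le> a s" and cv: "continuous_on A v"
  shows "continuous_on A (\<lambda>s. T (a s) (v s))"
  unfolding continuous_on_def
proof (intro ballI)
  fix s0 assume s0: "s0 \<in> A"
  let ?F = "at s0 within A"
  have "continuous_on A (\<lambda>s. T (a s) (v s0))"
    by (rule continuous_on_compose2[OF strong_cont ca]) (use a0 in auto)
  then have h1: "((\<lambda>s. T (a s) (v s0)) \<longlongrightarrow> T (a s0) (v s0)) ?F"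
    using s0 unfolding continuous_on_def by blast
  have la: "(a \<longlongrightarrow> a s0) ?F" and lv: "(v \<longlongrightarrow> v s0) ?F"
    using ca cv s0 unfolding continuous_on_def by auto
  have "((\<lambda>s. K * exp (\<omega> * a s) * norm (v s - v s0)) \<longlongrightarrow> K * exp (\<omega> * a s0) * norm (v s0 - v s0)) ?F"
    by (intro tendsto_intros la lv)
  then have g0: "((\<lambda>s. K * exp (\<omega> * a s) * norm (v s - v s0)) \<longlongrightarrow> 0) ?F" by simp
  have ev: "eventually (\<lambda>s. norm (T (a s) (v s - v s0)) \<le> K * exp (\<omega> * a s) * norm (v s - v s0)) ?F"
    unfolding eventually_at_filter
    by (intro always_eventually allI impI bnd_apply[of _ "a _"] a0) auto
  have h2: "((\<lambda>s. T (a s) (v s - v s0)) \<longlongrightarrow> 0) ?F"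
    by (rule Lim_null_comparison[OF ev g0])
  have "((\<lambda>s. T (a s) (v s - v s0) + T (a s) (v s0)) \<longlongrightarrow> 0 + T (a s0) (v s0)) ?F"
    by (intro tendsto_add h1 h2)
  then show "((\<lambda>s. T (a s) (v s)) \<longlongrightarrow> T (a s0) (v s0)) ?F"
    by (simp add: blinfun.diff_right)
qed

end

context sgb begin

lemma pc_piece_integrable:
  assumes pcS: "\<And>a b. 0 \<le> a \<Longrightarrow> a < b \<Longrightarrow> S \<inter> {a<..<b} = {} \<Longrightarrow>
                 (\<forall>s\<in>{a<..<b}. \<forall>t\<in>{a<..<b}. \<sigma> s = \<sigma> t)"
    and cont: "\<And>q. continuous_on {0..} (\<Phi> q)"
    and ab: "0 \<le> a" "a \<le> b" "b \<le> t" and emp: "S \<inter> {a<..<b} = {}"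
  shows "(\<lambda>s. T (t - s) (\<Phi> (\<sigma> s) s)) integrable_on {a..b}"
proof (cases "a = b")
  case True
  then show ?thesis unfolding integrable_on_def using has_integral_refl(2)[of _ b] by auto
next
  case False
  then have ab': "a < b" using ab by simp
  define q where "q = \<sigma> ((a + b) / 2)"
  have eq: "\<sigma> s = q" if "s \<in> {a<..<b}" for s
  proof -
    have m: "(a + b) / 2 \<in> {a<..<b}" using ab' by auto
    show ?thesis using pcS[OF ab(1) ab' emp] that m unfolding q_def by blast
  qed
  have "continuous_on {a..b} (\<lambda>s. T (t - s) (\<Phi> q s))"
    by (rule joint_cont) (use ab in \<open>auto intro!: continuous_intros continuous_on_subset[OF cont]\<close>)
  then have ii: "(\<lambda>s. T (t - s) (\<Phi> q s)) integrable_on {a..b}"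
    by (rule integrable_continuous_interval)
  show ?thesis
    by (rule integrable_spike_finite[of "{a, b}", OF _ _ ii]) (auto simp: eq)
qed

lemma pc_conv_integrable:
  assumes pc: "piecewise_constant \<sigma>" and cont: "\<And>q. continuous_on {0..} (\<Phi> q)" and t: "0 \<le> t"
  shows "(\<lambda>s. T (t - s) (\<Phi> (\<sigma> s) s)) integrable_on {0..t}"
proof -
  obtain S where S0: "S \<subseteq> {0..}" and Sfin: "\<And>b. finite (S \<inter> {0..b})"
    and pcS: "\<And>a b. 0 \<le> a \<Longrightarrow> a < b \<Longrightarrow> S \<inter> {a<..<b} = {} \<Longrightarrow>
                 (\<forall>s\<in>{a<..<b}. \<forall>t\<in>{a<..<b}. \<sigma> s = \<sigma> t)"
    using pc unfolding piecewise_constant_def by blast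
  have "(\<lambda>s. T (t - s) (\<Phi> (\<sigma> s) s)) integrable_on cbox 0 t"
  proof (rule integrable_on_little_subintervals, intro ballI)
    fix x assume x: "x \<in> cbox 0 t"
    obtain \<delta> where \<delta>: "\<delta> > 0" "\<And>y. y \<in> S \<inter> {0..x+1} \<Longrightarrow> y \<noteq> x \<Longrightarrow> \<delta> \<le> dist x y"
      using finite_set_avoid[OF Sfin[of "x+1"], of x] by blast
    define d where "d = min \<delta> 1"
    have nos: "y \<notin> S" if "dist x y < d" "y \<noteq> x" for y
    proof
      assume "y \<in> S"
      then have "y \<in> S \<inter> {0..x+1}" using S0 that unfolding d_def by (auto simp: dist_real_def)
      then show False using \<delta>(2)[of y] that unfolding d_def by auto
    qed
    show "\<exists>d>0. \<forall>u v. x \<in> cbox u v \<and> cbox u v \<subseteq> ball x d \<and> cbox u v \<subseteq> cbox 0 t \<longrightarrow>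
           (\<lambda>s. T (t - s) (\<Phi> (\<sigma> s) s)) integrable_on cbox u v"
    proof (intro exI[of _ d] conjI allI impI)
      show "d > 0" using \<delta> unfolding d_def by simp
      fix u v assume uv: "x \<in> cbox u v \<and> cbox u v \<subseteq> ball x d \<and> cbox u v \<subseteq> cbox 0 t"
      then have uxv: "u \<le> x" "x \<le> v" by auto
      have "u \<in> cbox u v" "v \<in> cbox u v" using uxv by auto
      then have ub: "u \<in> ball x d" "v \<in> ball x d" using uv by blast+
      have ut: "0 \<le> u" "v \<le> t" using uv uxv by auto
      have e1: "S \<inter> {u<..<x} = {}"
      proof (safe)
        fix y assume "y \<in> S" "y \<in> {u<..<x}"
        moreover have "dist x y < d" using ub \<open>y \<in> {u<..<x}\<close> by (auto simp: dist_real_def)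
        ultimately show "y \<in> {}" using nos by auto
      qed
      have e2: "S \<inter> {x<..<v} = {}"
      proof (safe)
        fix y assume "y \<in> S" "y \<in> {x<..<v}"
        moreover have "dist x y < d" using ub \<open>y \<in> {x<..<v}\<close> by (auto simp: dist_real_def)
        ultimately show "y \<in> {}" using nos by auto
      qed
      have i1: "(\<lambda>s. T (t - s) (\<Phi> (\<sigma> s) s)) integrable_on {u..x}"
        by (rule pc_piece_integrable[OF pcS cont]) (use ut uxv e1 in auto)
      have i2: "(\<lambda>s. T (t - s) (\<Phi> (\<sigma> s) s)) integrable_on {x..v}"
        by (rule pc_piece_integrable[OF pcS cont]) (use ut uxv e2 in auto)
      show "(\<lambda>s. T (t - s) (\<Phi> (\<sigma> s) s)) integrable_on cbox u v"
        using Henstock_Kurzweil_Integration.integrable_combine[OF uxv i1 i2] by (simp add: cbox_interval)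
    qed
  qed
  then show ?thesis by (simp add: cbox_interval)
qed

lemma conv_split:
  assumes t0: "0 \<le> t0" "t0 \<le> t"
    and I: "((\<lambda>s. T (t - s) (G s)) has_integral I) {0..t}"
    and I0: "((\<lambda>s. T (t0 - s) (G s)) has_integral I0) {0..t0}"
  shows "((\<lambda>s. T (t - s) (G s)) has_integral (I - T (t - t0) I0)) {t0..t}"
proof -
  have "(\<lambda>s. T (t - s) (G s)) integrable_on {t0..t}"
    using integrable_subinterval_real[OF has_integral_integrable[OF I], of t0 t] t0 by auto
  then obtain J where J: "((\<lambda>s. T (t - s) (G s)) has_integral J) {t0..t}" by blast
  have "((blinfun_apply (T (t - t0)) \<circ> (\<lambda>s. T (t0 - s) (G s))) has_integral T (t - t0) I0) {0..t0}"
    by (rule has_integral_linear[OF I0]) (rule blinfun.bounded_linear_right)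
  then have A: "((\<lambda>s. T (t - s) (G s)) has_integral T (t - t0) I0) {0..t0}"
  proof (rule has_integral_eq[rotated])
    fix s assume "s \<in> {0..t0}"
    then show "(blinfun_apply (T (t - t0)) \<circ> (\<lambda>s. T (t0 - s) (G s))) s = T (t - s) (G s)"
      using T_add_apply[of "t - t0" "t0 - s" "G s"] t0 by simp
  qed
  have "((\<lambda>s. T (t - s) (G s)) has_integral (T (t - t0) I0 + J)) {0..t}"
    by (rule has_integral_combine[OF t0 A J])
  then have "I = T (t - t0) I0 + J" using I by (rule has_integral_unique[rotated])
  then show ?thesis using J by (simp add: algebra_simps)
qed

end

lemma has_integral_shift_real:
  fixes g :: "real \<Rightarrow> 'a::banach"
  assumes "(g has_integral J) {c..c+\<tau>}"
  shows "((\<lambda>r. g (c + r)) has_integral J) {0..\<tau>}"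
proof -
  have "((\<lambda>x. g (1 *\<^sub>R x + c)) has_integral (J /\<^sub>R 1 ^ DIM(real)))
           (cbox ((c - c) /\<^sub>R 1) ((c + \<tau> - c) /\<^sub>R 1))"
    by (rule has_integral_affinity') (use assms in \<open>auto simp: cbox_interval\<close>)
  then show ?thesis by (simp add: cbox_interval add.commute)
qed

context sgb begin

lemma mild_shift:
  assumes mild: "mild_solution T f \<sigma> u x0 \<phi>" and t0: "0 \<le> t0"
  shows "mild_solution T f (\<lambda>s. \<sigma> (t0 + s)) (\<lambda>s. u (t0 + s)) (\<phi> t0) (\<lambda>s. \<phi> (t0 + s))"
  unfolding mild_solution_def
proof (intro conjI allI impI)
  have c: "continuous_on {0..} \<phi>" and I: "\<And>t. t \<ge> 0 \<Longrightarrow>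
      ((\<lambda>s. T (t - s) (f (\<sigma> s) (\<phi> s) (u s))) has_integral (\<phi> t - T t x0)) {0..t}"
    using mild unfolding mild_solution_def by auto
  show "continuous_on {0..} (\<lambda>s. \<phi> (t0 + s))"
    by (rule continuous_on_compose2[OF c]) (use t0 in \<open>auto intro!: continuous_intros\<close>)
  fix \<tau> :: real assume \<tau>: "0 \<le> \<tau>"
  have "((\<lambda>s. T (t0 + \<tau> - s) (f (\<sigma> s) (\<phi> s) (u s))) has_integral
          ((\<phi> (t0 + \<tau>) - T (t0 + \<tau>) x0) - T (t0 + \<tau> - t0) (\<phi> t0 - T t0 x0))) {t0..t0 + \<tau>}"
    by (rule conv_split[OF t0 _ I I]) (use t0 \<tau> in auto)
  moreover have eq: "(\<phi> (t0 + \<tau>) - T (t0 + \<tau>) x0) - T (t0 + \<tau> - t0) (\<phi> t0 - T t0 x0) = \<phi> (t0 + \<tau>) - T \<tau> (\<phi> t0)"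
    using T_add_apply[of \<tau> t0 x0] t0 \<tau> by (simp add: blinfun.diff_right add.commute)
  ultimately have "((\<lambda>s. T (t0 + \<tau> - s) (f (\<sigma> s) (\<phi> s) (u s))) has_integral
          (\<phi> (t0 + \<tau>) - T \<tau> (\<phi> t0))) {t0..t0 + \<tau>}" by (simp only:)
  from has_integral_shift_real[OF this]
  show "((\<lambda>s. T (\<tau> - s) (f (\<sigma> (t0 + s)) (\<phi> (t0 + s)) (u (t0 + s)))) has_integral
          (\<phi> (t0 + \<tau>) - T \<tau> (\<phi> t0))) {0..\<tau>}" by simp
qed

end

lemma norm3: "norm (a + b - c) \<le> norm a + norm b + norm (c::'a::real_normed_vector)"
  by (smt (verit) norm_triangle_ineq norm_triangle_ineq4)

context sgb begin

lemma conv_tail_bound: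
  assumes t: "0 \<le> t0" "t0 \<le> t" "t \<le> N" and B: "\<And>s. s \<in> {0..N} \<Longrightarrow> norm (G s) \<le> B" "0 \<le> B"
    and i: "(\<lambda>s. T (t - s) (G s)) integrable_on {t0..t}"
  shows "norm (integral {t0..t} (\<lambda>s. T (t - s) (G s))) \<le> K * exp (\<omega> * N) * B * (t - t0)"
proof -
  have "norm (integral (cbox t0 t) (\<lambda>s. T (t - s) (G s))) \<le> K * exp (\<omega> * N) * B * Henstock_Kurzweil_Integration.content (cbox t0 t)"
  proof (rule has_integral_bound)
    show "0 \<le> K * exp (\<omega> * N) * B" using K1 B by simp
    show "((\<lambda>s. T (t - s) (G s)) has_integral integral (cbox t0 t) (\<lambda>s. T (t - s) (G s))) (cbox t0 t)"
      using i by (simp add: cbox_interval integrable_integral)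
    fix s assume s: "s \<in> cbox t0 t"
    have "norm (T (t - s) (G s)) \<le> K * exp (\<omega> * N) * norm (G s)"
      using s t by (intro bnd_apply) auto
    also have "\<dots> \<le> K * exp (\<omega> * N) * B"
      using B(1)[of s] s t K1 by (intro mult_left_mono) auto
    finally show "norm (T (t - s) (G s)) \<le> K * exp (\<omega> * N) * B" .
  qed
  then show ?thesis using t by (simp add: cbox_interval)
qed

lemma conv_cont:
  assumes int: "\<And>t. 0 \<le> t \<Longrightarrow> (\<lambda>s. T (t - s) (G s)) integrable_on {0..t}"
    and bndG: "\<And>N. \<exists>B. \<forall>s\<in>{0..N}. norm (G s) \<le> B"
  shows "continuous_on {0..} (\<lambda>t. integral {0..t} (\<lambda>s. T (t - s) (G s)))"
proof -
  define \<Gamma> where "\<Gamma> t = integral {0..t} (\<lambda>s. T (t - s) (G s))" for t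
  define R where "R t0 t = integral {t0..t} (\<lambda>s. T (t - s) (G s))" for t0 t
  have split: "\<Gamma> t = T (t - t0) (\<Gamma> t0) + R t0 t" if "0 \<le> t0" "t0 \<le> t" for t0 t
  proof -
    have "((\<lambda>s. T (t - s) (G s)) has_integral (\<Gamma> t - T (t - t0) (\<Gamma> t0))) {t0..t}"
      unfolding \<Gamma>_def using that
      by (intro conv_split integrable_integral int) auto
    then show ?thesis unfolding R_def by (simp add: integral_unique)
  qed
  have intR: "(\<lambda>s. T (t - s) (G s)) integrable_on {t0..t}" if "0 \<le> t0" "t0 \<le> t" for t0 t
    using integrable_subinterval_real[OF int[of t], of t0 t] that by auto
  show ?thesis
    unfolding continuous_on_iff \<Gamma>_def[symmetric]
  proof (intro ballI allI impI)
    fix t e :: real assume t: "t \<in> {0..}" and e: "e > 0"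
    define N where "N = t + 1"
    obtain B0 where B0: "\<forall>s\<in>{0..N}. norm (G s) \<le> B0" using bndG by blast
    define B where "B = max B0 0"
    have B: "\<And>s. s \<in> {0..N} \<Longrightarrow> norm (G s) \<le> B" "0 \<le> B" using B0 unfolding B_def by force+
    define C where "C = K * exp (\<omega> * N) * B"
    have C0: "C \<ge> 0" unfolding C_def using K1 B by simp
    define \<eta> where "\<eta> = min (1/2) (e / (8 * (C + 1)))"
    have \<eta>: "\<eta> > 0" "\<eta> \<le> 1/2" "\<eta> \<le> e / (8 * (C + 1))" unfolding \<eta>_def using e C0 by (auto simp del: min_le_iff_disj simp: min_def)
    have C\<eta>: "3 * C * \<eta> < e / 2"
    proof -
      have "3 * C * \<eta> \<le> 3 * C * (e / (8 * (C + 1)))" using \<eta> C0 by (intro mult_left_mono) auto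
      also have "\<dots> = (3/8) * e * (C / (C + 1))" by (simp add: field_simps)
      also have "\<dots> < e / 2"
      proof -
        have "C / (C + 1) < 1" using C0 by simp
        then have "(3/8) * e * (C / (C + 1)) \<le> (3/8) * e * 1" using e by (intro mult_left_mono) auto
        then show ?thesis using e by linarith
      qed
      finally show ?thesis .
    qed
    define t0 where "t0 = max 0 (t - \<eta>)"
    have t0: "0 \<le> t0" "t0 \<le> t" "t - t0 \<le> \<eta>" using t \<eta> unfolding t0_def by auto
    obtain \<delta>1 where \<delta>1: "\<delta>1 > 0" "\<And>r. r \<in> {0..} \<Longrightarrow> dist r (t - t0) < \<delta>1 \<Longrightarrow>
        dist (T r (\<Gamma> t0)) (T (t - t0) (\<Gamma> t0)) < e / 2"
      using strong_cont[of "\<Gamma> t0"] t0 e unfolding continuous_on_iff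
      by (metis atLeast_iff diff_ge_0_iff_ge half_gt_zero)
    show "\<exists>d>0. \<forall>t'\<in>{0..}. dist t' t < d \<longrightarrow> dist (\<Gamma> t') (\<Gamma> t) < e"
    proof (intro exI[of _ "min \<delta>1 \<eta>"] conjI ballI impI)
      show "min \<delta>1 \<eta> > 0" using \<delta>1 \<eta> by simp
      fix t' assume t': "t' \<in> {0..}" "dist t' t < min \<delta>1 \<eta>"
      have t'0: "t0 \<le> t'" "t' - t0 \<le> 2 * \<eta>" "t' \<le> N" using t' t0 t \<eta> unfolding t0_def N_def
        by (auto simp: dist_real_def)
      have "dist (t' - t0) (t - t0) < \<delta>1" using t' by (simp add: dist_real_def)
      then have d1: "norm (T (t' - t0) (\<Gamma> t0) - T (t - t0) (\<Gamma> t0)) < e / 2"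
        using \<delta>1(2)[of "t' - t0"] t'0 by (simp add: dist_norm)
      have r1: "norm (R t0 t') \<le> C * (t' - t0)" unfolding R_def C_def
        by (rule conv_tail_bound[OF _ _ _ B]) (use t0 t'0 intR in auto)
      have r2: "norm (R t0 t) \<le> C * (t - t0)" unfolding R_def C_def
        by (rule conv_tail_bound[OF _ _ _ B]) (use t0 intR in \<open>auto simp: N_def\<close>)
      have "\<Gamma> t' - \<Gamma> t = (T (t' - t0) (\<Gamma> t0) - T (t - t0) (\<Gamma> t0)) + R t0 t' - R t0 t"
        using split[of t0 t'] split[of t0 t] t0 t'0 by simp
      then have "norm (\<Gamma> t' - \<Gamma> t) \<le> norm (T (t' - t0) (\<Gamma> t0) - T (t - t0) (\<Gamma> t0)) + norm (R t0 t') + norm (R t0 t)"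
        using norm3 by metis
      also have "\<dots> < e / 2 + C * (2 * \<eta>) + C * \<eta>"
        using d1 r1 r2 t'0 t0 C0 by (smt (verit) mult_left_mono)
      also have "\<dots> \<le> e" using C\<eta> by (simp add: algebra_simps)
      finally show "dist (\<Gamma> t') (\<Gamma> t) < e" by (simp add: dist_norm)
    qed
  qed
qed

end

lemma exp_has_integral:
  fixes a t :: real
  assumes a: "a > 0" and t: "0 \<le> t"
  shows "((\<lambda>s. exp (a * s)) has_integral (exp (a * t) - 1) / a) {0..t}"
proof -
  have "((\<lambda>s. exp (a * s)) has_integral ((\<lambda>s. exp (a * s) / a) t - (\<lambda>s. exp (a * s) / a) 0)) {0..t}"
  proof (rule fundamental_theorem_of_calculus[where f="\<lambda>s. exp (a * s) / a"])
    show "0 \<le> t" by (rule t)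
    fix x assume "x \<in> {0..t}"
    have "((\<lambda>s. exp (a * s) / a) has_real_derivative exp (a * x)) (at x within {0..t})"
      using a by (auto intro!: derivative_eq_intros)
    then show "((\<lambda>s. exp (a * s) / a) has_vector_derivative exp (a * x)) (at x within {0..t})"
      by (simp add: has_real_derivative_iff_has_vector_derivative)
  qed
  then show ?thesis by (simp add: diff_divide_distrib)
qed

locale sys = sgb T K \<omega> for T :: "real \<Rightarrow> ('x::banach \<Rightarrow>\<^sub>L 'x)" and K \<omega> +
  fixes f :: "'q \<Rightarrow> 'x \<Rightarrow> 'u::banach \<Rightarrow> 'x" and L :: real
  assumes L_pos: "L > 0"
    and lipschitz: "\<And>q. L-lipschitz_on UNIV (\<lambda>(x, v). f q x v)"
    and f_zero: "\<And>q. f q 0 0 = 0"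
begin

lemma f_lip: "norm (f q x v - f q y w) \<le> L * (norm (x - y) + norm (v - w))"
proof -
  have "dist ((\<lambda>(x, v). f q x v) (x, v)) ((\<lambda>(x, v). f q x v) (y, w)) \<le> L * dist (x, v) (y, w)"
    by (rule lipschitz_onD[OF lipschitz]) auto
  moreover have "dist (x, v) (y, w) \<le> norm (x - y) + norm (v - w)"
    using norm_Pair_le[of "x - y" "v - w"] by (simp add: dist_norm)
  ultimately show ?thesis using L_pos
    by (simp add: dist_norm) (smt (verit) mult_left_mono)
qed

lemma f_lip0: "norm (f q x 0 - f q y 0) \<le> L * norm (x - y)"
  using f_lip[of q x 0 y 0] by simp

lemma f_bound0: "norm (f q x 0) \<le> L * norm x"
  using f_lip0[of q x 0] by (simp add: f_zero)

lemma f_cont: "continuous_on UNIV (\<lambda>x. f q x 0)"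
proof -
  have "L-lipschitz_on UNIV (\<lambda>x. f q x 0)"
    unfolding lipschitz_on_def using L_pos f_lip0 by (auto simp: dist_norm)
  then show ?thesis by (rule lipschitz_on_continuous_on)
qed

lemma f_cont_comp: "continuous_on A \<psi> \<Longrightarrow> continuous_on A (\<lambda>s. f q (\<psi> s) 0)"
  using continuous_on_compose2[OF f_cont] by blast

lemma conv_exp_bound:
  assumes t: "0 \<le> t" and \<beta>: "\<beta> > \<omega>" and c: "c \<ge> 0"
    and i: "(\<lambda>s. T (t - s) (H s)) integrable_on {0..t}"
    and H: "\<And>s. s \<in> {0..t} \<Longrightarrow> norm (H s) \<le> c * exp (\<beta> * s)"
  shows "norm (integral {0..t} (\<lambda>s. T (t - s) (H s))) \<le> K * c * exp (\<beta> * t) / (\<beta> - \<omega>)"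
proof -
  have gi: "((\<lambda>s. K * c * exp (\<omega> * t) * exp ((\<beta> - \<omega>) * s)) has_integral
      K * c * exp (\<omega> * t) * ((exp ((\<beta> - \<omega>) * t) - 1) / (\<beta> - \<omega>))) {0..t}"
    by (intro has_integral_mult_right exp_has_integral) (use \<beta> t in auto)
  have "norm (integral {0..t} (\<lambda>s. T (t - s) (H s))) \<le>
      integral {0..t} (\<lambda>s. K * c * exp (\<omega> * t) * exp ((\<beta> - \<omega>) * s))"
  proof (rule integral_norm_bound_integral[OF i])
    show "(\<lambda>s. K * c * exp (\<omega> * t) * exp ((\<beta> - \<omega>) * s)) integrable_on {0..t}"
      using gi by blast
    fix s assume s: "s \<in> {0..t}"
    have "norm (T (t - s) (H s)) \<le> norm (T (t - s)) * norm (H s)" by (rule norm_blinfun)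
    also have "\<dots> \<le> (K * exp (\<omega> * (t - s))) * (c * exp (\<beta> * s))"
      using s bnd[of "t - s"] H[OF s] K1 by (intro mult_mono) auto
    also have "\<dots> = K * c * exp (\<omega> * t) * exp ((\<beta> - \<omega>) * s)"
      by (simp add: algebra_simps flip: exp_add)
    finally show "norm (T (t - s) (H s)) \<le> K * c * exp (\<omega> * t) * exp ((\<beta> - \<omega>) * s)" .
  qed
  also have "\<dots> = K * c * exp (\<omega> * t) * ((exp ((\<beta> - \<omega>) * t) - 1) / (\<beta> - \<omega>))"
    using gi by (rule integral_unique)
  also have "\<dots> \<le> K * c * exp (\<omega> * t) * (exp ((\<beta> - \<omega>) * t) / (\<beta> - \<omega>))"
    using K1 c \<beta> by (intro mult_left_mono divide_right_mono) auto
  also have "\<dots> = K * c * exp (\<beta> * t) / (\<beta> - \<omega>)"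
    by (simp add: algebra_simps flip: exp_add)
  finally show ?thesis .
qed

end

context sys begin

lemma exists_unforced:
  assumes pc: "piecewise_constant \<sigma>"
  shows "\<exists>\<psi>. mild_solution T f \<sigma> (\<lambda>_. 0) x \<psi>"
proof -
  define \<beta> where "\<beta> = \<omega> + 2 * K * L"
  have \<beta>\<omega>: "\<beta> > \<omega>" using K1 L_pos unfolding \<beta>_def by simp
  have \<beta>0: "\<beta> > 0" using \<beta>\<omega> om by simp
  have KL: "K * L / (\<beta> - \<omega>) = 1/2" using K1 L_pos unfolding \<beta>_def by simp
  define \<psi> where "\<psi> g s = exp (\<beta> * s) *\<^sub>R apply_bcontfun g s" for g :: "real \<Rightarrow>\<^sub>C 'x" and s
  define \<Gamma> where "\<Gamma> g t = integral {0..t} (\<lambda>s. T (t - s) (f (\<sigma> s) (\<psi> g s) 0))" for g t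
  define P where "P g t = exp (- \<beta> * t) *\<^sub>R (T t x + \<Gamma> g t)" for g t
  have \<psi>c: "continuous_on A (\<psi> g)" for g A
    unfolding \<psi>_def by (intro continuous_intros) auto
  have \<psi>b: "norm (\<psi> g s) \<le> exp (\<beta> * s) * norm g" for g s
    unfolding \<psi>_def using norm_bounded[of g s] by (simp add: mult_left_mono)
  have intg: "(\<lambda>s. T (t - s) (f (\<sigma> s) (\<psi> g s) 0)) integrable_on {0..t}" if "0 \<le> t" for g t
    by (rule pc_conv_integrable[OF pc _ that, where \<Phi>="\<lambda>q s. f q (\<psi> g s) 0"])
      (intro f_cont_comp \<psi>c)
  have Hb: "norm (f q (\<psi> g s) 0) \<le> L * norm g * exp (\<beta> * s)" for q g s
  proof -
    have "norm (f q (\<psi> g s) 0) \<le> L * norm (\<psi> g s)" by (rule f_bound0)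
    also have "\<dots> \<le> L * (exp (\<beta> * s) * norm g)" using \<psi>b L_pos by (intro mult_left_mono) auto
    finally show ?thesis by (simp add: algebra_simps)
  qed
  have \<Gamma>c: "continuous_on {0..} (\<Gamma> g)" for g
    unfolding \<Gamma>_def
  proof (rule conv_cont[OF intg])
    fix N :: real
    show "\<exists>B. \<forall>s\<in>{0..N}. norm (f (\<sigma> s) (\<psi> g s) 0) \<le> B"
    proof (intro exI ballI)
      fix s assume "s \<in> {0..N}"
      then have "exp (\<beta> * s) \<le> exp (\<beta> * N)" using \<beta>0 by auto
      then show "norm (f (\<sigma> s) (\<psi> g s) 0) \<le> L * norm g * exp (\<beta> * N)"
        using Hb[of "\<sigma> s" g s] L_pos by (meson mult_left_mono order_trans mult_nonneg_nonneg norm_ge_zero less_imp_le)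
    qed
  qed auto
  have \<Gamma>b: "norm (\<Gamma> g t) \<le> norm g / 2 * exp (\<beta> * t)" if "0 \<le> t" for g t
  proof -
    have "norm (\<Gamma> g t) \<le> K * (L * norm g) * exp (\<beta> * t) / (\<beta> - \<omega>)"
      unfolding \<Gamma>_def using L_pos by (intro conv_exp_bound that \<beta>\<omega> intg Hb) auto
    also have "\<dots> = (K * L / (\<beta> - \<omega>)) * norm g * exp (\<beta> * t)" by simp
    finally show ?thesis using KL by simp
  qed
  have Pc: "continuous_on {0..} (P g)" for g
    unfolding P_def by (intro continuous_intros strong_cont \<Gamma>c)
  have Pb: "norm (P g t) \<le> K * norm x + norm g / 2" if t: "0 \<le> t" for g t
  proof -
    have "norm (T t x + \<Gamma> g t) \<le> K * exp (\<omega> * t) * norm x + norm g / 2 * exp (\<beta> * t)"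
      using bnd_apply[of t t x] \<Gamma>b[OF t, of g] t by (smt (verit) norm_triangle_ineq)
    then have "norm (P g t) \<le> exp (- \<beta> * t) * (K * exp (\<omega> * t) * norm x + norm g / 2 * exp (\<beta> * t))"
      unfolding P_def by (simp add: mult_left_mono)
    also have "\<dots> = K * exp ((\<omega> - \<beta>) * t) * norm x + norm g / 2"
      by (simp add: algebra_simps flip: exp_add)
    also have "\<dots> \<le> K * 1 * norm x + norm g / 2"
      using t \<beta>\<omega> K1 by (intro add_right_mono mult_right_mono mult_left_mono) (auto simp: mult_nonpos_nonneg)
    finally show ?thesis by simp
  qed
  have inb: "(\<lambda>t. P g (max 0 t)) \<in> bcontfun" for g
  proof (rule bcontfun_normI)
    show "continuous_on UNIV (\<lambda>t. P g (max 0 t))"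
      by (rule continuous_on_compose2[OF Pc[of g]]) (auto intro!: continuous_intros)
    show "norm (P g (max 0 t)) \<le> K * norm x + norm g / 2" for t by (rule Pb) simp
  qed
  define \<Phi> where "\<Phi> g = Bcontfun (\<lambda>t. P g (max 0 t))" for g
  have \<Phi>app: "apply_bcontfun (\<Phi> g) t = P g (max 0 t)" for g t
    unfolding \<Phi>_def using Bcontfun_inverse[OF inb[of g]] by simp
  have contr: "dist (\<Phi> g1) (\<Phi> g2) \<le> 1/2 * dist g1 g2" for g1 g2
  proof (rule dist_bound)
    fix t :: real
    define \<tau> where "\<tau> = max 0 t"
    have \<tau>: "0 \<le> \<tau>" unfolding \<tau>_def by simp
    define H where "H s = f (\<sigma> s) (\<psi> g1 s) 0 - f (\<sigma> s) (\<psi> g2 s) 0" for s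
    have "\<Gamma> g1 \<tau> - \<Gamma> g2 \<tau> = integral {0..\<tau>} (\<lambda>s. T (\<tau> - s) (f (\<sigma> s) (\<psi> g1 s) 0) - T (\<tau> - s) (f (\<sigma> s) (\<psi> g2 s) 0))"
      unfolding \<Gamma>_def by (rule integral_diff[symmetric]) (intro intg \<tau>)+
    also have "\<dots> = integral {0..\<tau>} (\<lambda>s. T (\<tau> - s) (H s))"
      unfolding H_def by (simp add: blinfun.diff_right)
    finally have eq: "\<Gamma> g1 \<tau> - \<Gamma> g2 \<tau> = integral {0..\<tau>} (\<lambda>s. T (\<tau> - s) (H s))" .
    have iH: "(\<lambda>s. T (\<tau> - s) (H s)) integrable_on {0..\<tau>}"
      unfolding H_def blinfun.diff_right by (intro integrable_diff intg \<tau>)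
    have Hb': "norm (H s) \<le> L * dist g1 g2 * exp (\<beta> * s)" for s
    proof -
      have "norm (H s) \<le> L * norm (\<psi> g1 s - \<psi> g2 s)" unfolding H_def by (rule f_lip0)
      also have "norm (\<psi> g1 s - \<psi> g2 s) = exp (\<beta> * s) * dist (apply_bcontfun g1 s) (apply_bcontfun g2 s)"
        unfolding \<psi>_def by (simp add: dist_norm flip: scaleR_diff_right)
      also have "\<dots> \<le> exp (\<beta> * s) * dist g1 g2" by (simp add: dist_bounded)
      finally show ?thesis using L_pos
        by (smt (verit, best) mult.assoc mult.commute mult_left_mono)
    qed
    have "norm (\<Gamma> g1 \<tau> - \<Gamma> g2 \<tau>) \<le> K * (L * dist g1 g2) * exp (\<beta> * \<tau>) / (\<beta> - \<omega>)"
      unfolding eq using L_pos by (intro conv_exp_bound \<tau> \<beta>\<omega> iH Hb') auto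
    also have "\<dots> = (K * L / (\<beta> - \<omega>)) * dist g1 g2 * exp (\<beta> * \<tau>)" by simp
    finally have nb: "norm (\<Gamma> g1 \<tau> - \<Gamma> g2 \<tau>) \<le> 1/2 * dist g1 g2 * exp (\<beta> * \<tau>)" using KL by simp
    have "dist (\<Phi> g1 t) (\<Phi> g2 t) = norm (P g1 \<tau> - P g2 \<tau>)"
      unfolding \<Phi>app \<tau>_def dist_norm ..
    also have "P g1 \<tau> - P g2 \<tau> = exp (- \<beta> * \<tau>) *\<^sub>R (\<Gamma> g1 \<tau> - \<Gamma> g2 \<tau>)"
      unfolding P_def by (simp add: algebra_simps)
    also have "norm (exp (- \<beta> * \<tau>) *\<^sub>R (\<Gamma> g1 \<tau> - \<Gamma> g2 \<tau>)) \<le> exp (- \<beta> * \<tau>) * (1/2 * dist g1 g2 * exp (\<beta> * \<tau>))"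
      using nb by (simp add: mult_left_mono)
    also have "\<dots> = 1/2 * dist g1 g2"
      by (simp add: algebra_simps flip: exp_add)
    finally show "dist (\<Phi> g1 t) (\<Phi> g2 t) \<le> 1/2 * dist g1 g2" .
  qed
  obtain g where g: "\<Phi> g = g"
    using banach_fix_type[of "1/2" \<Phi>] contr by auto
  show ?thesis
  proof (intro exI[of _ "\<psi> g"])
    show "mild_solution T f \<sigma> (\<lambda>_. 0) x (\<psi> g)"
      unfolding mild_solution_def
    proof (intro conjI allI impI)
      show "continuous_on {0..} (\<psi> g)" by (rule \<psi>c)
      fix t :: real assume t: "0 \<le> t"
      have "apply_bcontfun g t = P g t" using \<Phi>app[of g t] g t by simp
      then have "\<psi> g t = T t x + \<Gamma> g t"
        unfolding \<psi>_def P_def by (simp flip: exp_add)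
      then have "\<psi> g t - T t x = \<Gamma> g t" by simp
      then show "((\<lambda>s. T (t - s) (f (\<sigma> s) (\<psi> g s) 0)) has_integral (\<psi> g t - T t x)) {0..t}"
        unfolding \<Gamma>_def using intg[OF t] by (simp add: integrable_integral)
    qed
  qed
qed

end

lemma gronwall_max:
  fixes D :: "real \<Rightarrow> real"
  assumes h: "0 \<le> h" and c: "c > 0" and A: "A \<ge> 0"
    and Dc: "continuous_on {0..h} D" and D0: "\<And>\<tau>. \<tau> \<in> {0..h} \<Longrightarrow> 0 \<le> D \<tau>"
    and Di: "\<And>\<tau>. \<tau> \<in> {0..h} \<Longrightarrow> D \<tau> \<le> A + c * integral {0..\<tau>} D"
    and \<tau>: "\<tau> \<in> {0..h}"
  shows "D \<tau> \<le> 2 * A * exp (2 * c * \<tau>)"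
proof -
  define E where "E s = D s * exp (- (2 * c) * s)" for s
  have "continuous_on {0..h} E" unfolding E_def by (intro continuous_intros Dc)
  then obtain m where m: "m \<in> {0..h}" and mx: "\<And>s. s \<in> {0..h} \<Longrightarrow> E s \<le> E m"
    using continuous_attains_sup[of "{0..h}" E] h by auto
  define Q where "Q = E m"
  have Q0: "Q \<ge> 0" unfolding Q_def E_def using D0[OF m] by simp
  have DQ: "D s \<le> Q * exp (2 * c * s)" if "s \<in> {0..h}" for s
  proof -
    have "D s = E s * exp (2 * c * s)" unfolding E_def by (simp flip: exp_add)
    also have "\<dots> \<le> Q * exp (2 * c * s)" using mx[OF that] unfolding Q_def by simp
    finally show ?thesis .
  qed
  have key: "E s \<le> A + Q / 2" if s: "s \<in> {0..h}" for s
  proof -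
    have s0: "0 \<le> s" using s by simp
    have gi: "((\<lambda>r. Q * exp (2 * c * r)) has_integral Q * ((exp (2 * c * s) - 1) / (2 * c))) {0..s}"
      by (intro has_integral_mult_right exp_has_integral) (use c s0 in auto)
    have "integral {0..s} D \<le> integral {0..s} (\<lambda>r. Q * exp (2 * c * r))"
    proof (rule integral_le)
      show "D integrable_on {0..s}"
        by (rule integrable_continuous_interval, rule continuous_on_subset[OF Dc]) (use s in auto)
      show "(\<lambda>r. Q * exp (2 * c * r)) integrable_on {0..s}" using gi by blast
      show "\<And>x. x \<in> {0..s} \<Longrightarrow> D x \<le> Q * exp (2 * c * x)" using DQ s by auto
    qed
    also have "\<dots> = Q * ((exp (2 * c * s) - 1) / (2 * c))" using gi by (rule integral_unique)
    also have "\<dots> \<le> Q * (exp (2 * c * s) / (2 * c))"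
      using Q0 c by (intro mult_left_mono divide_right_mono) auto
    finally have "c * integral {0..s} D \<le> c * (Q * (exp (2 * c * s) / (2 * c)))"
      using c by (intro mult_left_mono) auto
    also have "\<dots> = Q / 2 * exp (2 * c * s)" using c by simp
    finally have "D s \<le> A + Q / 2 * exp (2 * c * s)" using Di[OF s] by linarith
    then have "E s \<le> (A + Q / 2 * exp (2 * c * s)) * exp (- (2 * c) * s)"
      unfolding E_def by (intro mult_right_mono) auto
    also have "\<dots> = A * exp (- (2 * c) * s) + Q / 2"
      by (simp add: algebra_simps flip: exp_add)
    also have "\<dots> \<le> A * 1 + Q / 2"
      using A c s0 by (intro add_right_mono mult_left_mono) auto
    finally show ?thesis by simp
  qed
  have "Q \<le> 2 * A" using key[OF m] unfolding Q_def by simp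
  then show ?thesis using DQ[OF \<tau>] by (smt (verit) exp_gt_zero mult_right_mono)
qed

context sys begin

lemma compare:
  assumes m1: "mild_solution T f \<sigma> u x0 \<phi>" and m2: "mild_solution T f \<sigma> (\<lambda>_. 0) x0 \<psi>"
    and h: "0 \<le> h" and ui: "(\<lambda>s. norm (u s)) integrable_on {0..h}"
    and \<tau>: "\<tau> \<in> {0..h}"
  shows "norm (\<phi> \<tau> - \<psi> \<tau>) \<le> 2 * (K * exp (\<omega> * h) * L) * exp (2 * (K * exp (\<omega> * h) * L) * h)
            * integral {0..h} (\<lambda>s. norm (u s))"
proof -
  define c where "c = K * exp (\<omega> * h) * L"
  have c0: "c > 0" unfolding c_def using K1 L_pos by simp
  define U where "U = integral {0..h} (\<lambda>s. norm (u s))"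
  have U0: "U \<ge> 0" unfolding U_def by (rule integral_nonneg[OF ui]) auto
  define D where "D s = norm (\<phi> s - \<psi> s)" for s
  have c1: "continuous_on {0..} \<phi>" and I1: "\<And>t. t \<ge> 0 \<Longrightarrow>
      ((\<lambda>s. T (t - s) (f (\<sigma> s) (\<phi> s) (u s))) has_integral (\<phi> t - T t x0)) {0..t}"
    using m1 unfolding mild_solution_def by auto
  have c2: "continuous_on {0..} \<psi>" and I2: "\<And>t. t \<ge> 0 \<Longrightarrow>
      ((\<lambda>s. T (t - s) (f (\<sigma> s) (\<psi> s) 0)) has_integral (\<psi> t - T t x0)) {0..t}"
    using m2 unfolding mild_solution_def by auto
  have Dc: "continuous_on {0..h} D" unfolding D_def
    by (intro continuous_intros continuous_on_subset[OF c1] continuous_on_subset[OF c2]) auto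
  have Di: "D t \<le> c * U + c * integral {0..t} D" if t: "t \<in> {0..h}" for t
  proof -
    have t0: "0 \<le> t" using t by simp
    have "((\<lambda>s. T (t - s) (f (\<sigma> s) (\<phi> s) (u s)) - T (t - s) (f (\<sigma> s) (\<psi> s) 0)) has_integral
           ((\<phi> t - T t x0) - (\<psi> t - T t x0))) {0..t}"
      by (intro has_integral_diff I1 I2 t0)
    then have hi: "((\<lambda>s. T (t - s) (f (\<sigma> s) (\<phi> s) (u s) - f (\<sigma> s) (\<psi> s) 0)) has_integral (\<phi> t - \<psi> t)) {0..t}"
      by (simp add: blinfun.diff_right)
    have uit: "(\<lambda>s. norm (u s)) integrable_on {0..t}"
      by (rule integrable_subinterval_real[OF ui]) (use t in auto)
    have Dit: "D integrable_on {0..t}"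
      by (rule integrable_continuous_interval, rule continuous_on_subset[OF Dc]) (use t in auto)
    have "norm (\<phi> t - \<psi> t) \<le> integral {0..t} (\<lambda>s. c * (D s + norm (u s)))"
    proof -
      have "norm (integral {0..t} (\<lambda>s. T (t - s) (f (\<sigma> s) (\<phi> s) (u s) - f (\<sigma> s) (\<psi> s) 0)))
            \<le> integral {0..t} (\<lambda>s. c * (D s + norm (u s)))"
      proof (rule integral_norm_bound_integral)
        show "(\<lambda>s. T (t - s) (f (\<sigma> s) (\<phi> s) (u s) - f (\<sigma> s) (\<psi> s) 0)) integrable_on {0..t}"
          using hi by blast
        show "(\<lambda>s. c * (D s + norm (u s))) integrable_on {0..t}"
          using integrable_on_cmult_left[OF integrable_add[OF Dit uit], of c] by simp
        fix s assume s: "s \<in> {0..t}"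
        have "norm (T (t - s) (f (\<sigma> s) (\<phi> s) (u s) - f (\<sigma> s) (\<psi> s) 0))
              \<le> K * exp (\<omega> * h) * norm (f (\<sigma> s) (\<phi> s) (u s) - f (\<sigma> s) (\<psi> s) 0)"
          using s t by (intro bnd_apply) auto
        also have "\<dots> \<le> K * exp (\<omega> * h) * (L * (norm (\<phi> s - \<psi> s) + norm (u s - 0)))"
          using K1 by (intro mult_left_mono f_lip) auto
        also have "\<dots> = c * (D s + norm (u s))" unfolding c_def D_def by simp
        finally show "norm (T (t - s) (f (\<sigma> s) (\<phi> s) (u s) - f (\<sigma> s) (\<psi> s) 0)) \<le> c * (D s + norm (u s))" .
      qed
      then show ?thesis using hi by (simp add: integral_unique)
    qed
    also have "\<dots> = c * integral {0..t} D + c * integral {0..t} (\<lambda>s. norm (u s))"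
    proof -
      have "integral {0..t} (\<lambda>s. c * (D s + norm (u s))) = c * integral {0..t} (\<lambda>s. D s + norm (u s))"
        by (rule integral_mult_right)
      also have "integral {0..t} (\<lambda>s. D s + norm (u s)) = integral {0..t} D + integral {0..t} (\<lambda>s. norm (u s))"
        by (rule integral_add[OF Dit uit])
      finally show ?thesis by (simp add: distrib_left)
    qed
    also have "integral {0..t} (\<lambda>s. norm (u s)) \<le> U"
      unfolding U_def by (rule integral_subset_le) (use t uit ui in auto)
    finally show ?thesis using c0 unfolding D_def
      by (smt (verit) mult_left_mono)
  qed
  have "D \<tau> \<le> 2 * (c * U) * exp (2 * c * \<tau>)"
    by (rule gronwall_max[OF h c0 _ Dc _ Di \<tau>]) (use c0 U0 in \<open>auto simp: D_def\<close>)
  also have "\<dots> \<le> 2 * (c * U) * exp (2 * c * h)"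
    using c0 U0 \<tau> by (intro mult_left_mono) auto
  finally show ?thesis unfolding D_def c_def U_def by (simp add: algebra_simps)
qed

end

lemma pc_shift:
  assumes pc: "piecewise_constant \<sigma>" and t0: "0 \<le> t0"
  shows "piecewise_constant (\<lambda>s. \<sigma> (t0 + s))"
proof -
  obtain S where S0: "S \<subseteq> {0..}" and Sfin: "\<And>b. finite (S \<inter> {0..b})"
    and pcS: "\<And>a b. 0 \<le> a \<Longrightarrow> a < b \<Longrightarrow> S \<inter> {a<..<b} = {} \<Longrightarrow>
                 (\<forall>s\<in>{a<..<b}. \<forall>t\<in>{a<..<b}. \<sigma> s = \<sigma> t)"
    using pc unfolding piecewise_constant_def by blast
  define S' where "S' = (\<lambda>s. s - t0) ` (S \<inter> {t0..})"
  show ?thesis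
    unfolding piecewise_constant_def
  proof (intro exI[of _ S'] conjI allI impI ballI)
    show "S' \<subseteq> {0..}" unfolding S'_def by auto
    fix b :: real
    have "S' \<inter> {0..b} \<subseteq> (\<lambda>s. s - t0) ` (S \<inter> {0..b + t0})" unfolding S'_def using t0 by auto
    then show "finite (S' \<inter> {0..b})" using Sfin by (meson finite_imageI finite_subset)
  next
    fix a b s t :: real assume ab: "0 \<le> a" "a < b" "S' \<inter> {a<..<b} = {}" and st: "s \<in> {a<..<b}" "t \<in> {a<..<b}"
    have "S \<inter> {a + t0<..<b + t0} = {}"
    proof safe
      fix y assume y: "y \<in> S" "y \<in> {a + t0<..<b + t0}"
      then have "y - t0 \<in> S'" unfolding S'_def using ab by (auto intro!: image_eqI[of _ _ y])
      then show "y \<in> {}" using ab y by auto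
    qed
    then show "\<sigma> (t0 + s) = \<sigma> (t0 + t)"
      using pcS[of "a + t0" "b + t0"] ab st t0 by (auto simp: add.commute)
  qed
qed

context sys begin

lemma step:
  assumes uges: "\<forall>\<sigma>\<in>PC. \<forall>x \<psi>. mild_solution T f \<sigma> (\<lambda>_. 0) x \<psi> \<longrightarrow>
            (\<forall>t\<ge>0. norm (\<psi> t) \<le> M * exp (- lam * t) * norm x)"
    and \<sigma>: "\<sigma> \<in> PC" and m: "mild_solution T f \<sigma> u x0 \<phi>" and t0: "0 \<le> t0" and h: "0 \<le> h"
    and ui: "(\<lambda>s. norm (u s)) integrable_on {t0..t0+h}"
    and \<tau>: "\<tau> \<in> {0..h}"
  shows "norm (\<phi> (t0 + \<tau>)) \<le> M * exp (- lam * \<tau>) * norm (\<phi> t0) +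
     2 * (K * exp (\<omega> * h) * L) * exp (2 * (K * exp (\<omega> * h) * L) * h) * integral {t0..t0+h} (\<lambda>s. norm (u s))"
proof -
  have pc': "(\<lambda>s. \<sigma> (t0 + s)) \<in> PC"
    using pc_shift[of \<sigma> t0] \<sigma> t0 unfolding PC_def by auto
  obtain \<psi> where \<psi>: "mild_solution T f (\<lambda>s. \<sigma> (t0 + s)) (\<lambda>_. 0) (\<phi> t0) \<psi>"
    using exists_unforced[of "\<lambda>s. \<sigma> (t0 + s)" "\<phi> t0"] pc' unfolding PC_def by auto
  have m': "mild_solution T f (\<lambda>s. \<sigma> (t0 + s)) (\<lambda>s. u (t0 + s)) (\<phi> t0) (\<lambda>s. \<phi> (t0 + s))"
    by (rule mild_shift[OF m t0])
  have ui': "((\<lambda>r. norm (u (t0 + r))) has_integral integral {t0..t0+h} (\<lambda>s. norm (u s))) {0..h}"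
    using has_integral_shift_real[OF integrable_integral[OF ui]] by simp
  have "norm (\<phi> (t0 + \<tau>) - \<psi> \<tau>) \<le> 2 * (K * exp (\<omega> * h) * L) * exp (2 * (K * exp (\<omega> * h) * L) * h)
            * integral {0..h} (\<lambda>r. norm (u (t0 + r)))"
    using compare[OF m' \<psi> h _ \<tau>] ui' by blast
  also have "integral {0..h} (\<lambda>r. norm (u (t0 + r))) = integral {t0..t0+h} (\<lambda>s. norm (u s))"
    using ui' by (rule integral_unique)
  finally have d: "norm (\<phi> (t0 + \<tau>) - \<psi> \<tau>) \<le> 2 * (K * exp (\<omega> * h) * L) * exp (2 * (K * exp (\<omega> * h) * L) * h)
            * integral {t0..t0+h} (\<lambda>s. norm (u s))" .
  have "norm (\<psi> \<tau>) \<le> M * exp (- lam * \<tau>) * norm (\<phi> t0)"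
    using uges pc' \<psi> \<tau> by auto
  then show ?thesis using d norm_triangle_ineq[of "\<psi> \<tau>" "\<phi> (t0 + \<tau>) - \<psi> \<tau>"] by simp
qed

end

lemma powr_tangent:
  fixes m y P :: real
  assumes m: "m > 0" and y: "y \<ge> 0" and P: "P \<ge> 1"
  shows "m powr P + P * m powr (P - 1) * (y - m) \<le> y powr P"
proof (cases "y = 0")
  case True
  have "P * m powr (P - 1) * m = P * m powr P"
    using m by (simp add: powr_diff field_simps)
  then show ?thesis using True P m by (simp add: algebra_simps)
next
  case False
  then have y0: "y > 0" using y by simp
  have "((\<lambda>x. x powr P) has_field_derivative P * m powr (P - 1)) (at m within {0<..})"
    using m by (auto intro!: derivative_eq_intros simp: powr_diff field_simps)
  then have "y powr P - m powr P \<ge> P * m powr (P - 1) * (y - m)"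
    using m y0 powr_convex[OF P] by (intro convex_on_imp_above_tangent) (auto simp: interior_open)
  then show ?thesis by simp
qed

lemma powr_midpoint:
  fixes x y P :: real
  assumes x: "x \<ge> 0" and y: "y \<ge> 0" and P: "P \<ge> 1"
  shows "(x / 2 + y / 2) powr P \<le> x powr P / 2 + y powr P / 2"
proof -
  have two: "(2::real) powr P \<ge> 2" using P powr_mono[of 1 P 2] by simp
  have half: "(z / 2) powr P \<le> z powr P / 2" if "z \<ge> 0" for z :: real
  proof -
    have "(z / 2) powr P = z powr P / 2 powr P" using that by (simp add: powr_divide)
    also have "\<dots> \<le> z powr P / 2" using two by (intro divide_left_mono) auto
    finally show ?thesis .
  qed
  show ?thesis
  proof (cases "x = 0 \<or> y = 0")
    case True
    then show ?thesis using half[OF x] half[OF y] P by auto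
  next
    case False
    then have "x > 0" "y > 0" using x y by auto
    then have "(\<lambda>x. x powr P) ((1 - 1/2) *\<^sub>R x + (1/2) *\<^sub>R y) \<le> (1 - 1/2) * x powr P + (1/2) * y powr P"
      by (intro convex_onD[OF powr_convex[OF P]]) auto
    then show ?thesis by simp
  qed
qed

lemma disc_bound:
  fixes e b :: "nat \<Rightarrow> real" and P :: real
  assumes P: "P \<ge> 1" and e0: "e 0 = 0" and eS: "\<And>n. e (Suc n) = e n / 2 + b n" and b0: "\<And>n. b n \<ge> 0"
  shows "(\<Sum>n<N. e (Suc n) powr P) \<le> 2 powr P * (\<Sum>n<N. b n powr P)"
proof -
  have enn: "e n \<ge> 0" for n by (induction n) (auto simp: e0 eS b0)
  have step: "e (Suc n) powr P \<le> e n powr P / 2 + 2 powr P * b n powr P / 2" for n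
  proof -
    have "e (Suc n) = e n / 2 + (2 * b n) / 2" by (simp add: eS)
    then have "e (Suc n) powr P \<le> e n powr P / 2 + (2 * b n) powr P / 2"
      using powr_midpoint[OF enn[of n] _ P, of "2 * b n"] b0[of n] by simp
    also have "(2 * b n) powr P = 2 powr P * b n powr P" using b0[of n] by (simp add: powr_mult)
    finally show ?thesis .
  qed
  define S where "S = (\<Sum>n<N. e (Suc n) powr P)"
  have shift: "(\<Sum>n<N. e n powr P) \<le> S"
  proof (cases N)
    case 0 then show ?thesis unfolding S_def by simp
  next
    case (Suc m)
    have "(\<Sum>n<N. e n powr P) = e 0 powr P + (\<Sum>n<m. e (Suc n) powr P)"
      unfolding Suc by (rule sum.lessThan_Suc_shift)
    also have "\<dots> = (\<Sum>n<m. e (Suc n) powr P)" using e0 by simp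
    also have "\<dots> \<le> (\<Sum>n<Suc m. e (Suc n) powr P)" by simp
    finally show ?thesis unfolding S_def Suc .
  qed
  have "S \<le> (\<Sum>n<N. e n powr P / 2 + 2 powr P * b n powr P / 2)"
    unfolding S_def by (intro sum_mono step)
  also have "\<dots> = (\<Sum>n<N. e n powr P) / 2 + 2 powr P * (\<Sum>n<N. b n powr P) / 2"
    by (simp add: sum.distrib sum_divide_distrib sum_distrib_left)
  finally show ?thesis using shift unfolding S_def by linarith
qed

lemma jensen_interval:
  fixes g :: "real \<Rightarrow> real" and P h a :: real
  assumes P: "P \<ge> 1" and h: "h > 0"
    and gi: "g integrable_on {a..a+h}" and gpi: "(\<lambda>s. g s powr P) integrable_on {a..a+h}"
    and g0: "\<And>s. s \<in> {a..a+h} \<Longrightarrow> g s \<ge> 0"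
  shows "(integral {a..a+h} g) powr P \<le> h powr (P - 1) * integral {a..a+h} (\<lambda>s. g s powr P)"
proof -
  define m where "m = integral {a..a+h} g / h"
  have I0: "integral {a..a+h} g \<ge> 0" using g0 by (intro integral_nonneg gi) auto
  have Ip0: "integral {a..a+h} (\<lambda>s. g s powr P) \<ge> 0" by (intro integral_nonneg gpi) auto
  show ?thesis
  proof (cases "m = 0")
    case True
    then have "integral {a..a+h} g = 0" unfolding m_def using h by simp
    then show ?thesis using P Ip0 by simp
  next
    case False
    then have m0: "m > 0" unfolding m_def using I0 h by simp
    have gmi: "(\<lambda>s. g s - m) integrable_on {a..a+h}" by (intro integrable_diff integrable_const_ivl gi)
    have cmi: "(\<lambda>s. P * m powr (P - 1) * (g s - m)) integrable_on {a..a+h}"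
      using integrable_on_cmult_left[OF gmi, of "P * m powr (P - 1)"] by simp
    have ci: "(\<lambda>s. m powr P + P * m powr (P - 1) * (g s - m)) integrable_on {a..a+h}"
      by (intro integrable_add integrable_const_ivl cmi)
    have "integral {a..a+h} (\<lambda>s. m powr P + P * m powr (P - 1) * (g s - m)) \<le> integral {a..a+h} (\<lambda>s. g s powr P)"
      by (rule integral_le[OF ci gpi]) (intro powr_tangent m0 g0 P, auto)
    also have "integral {a..a+h} (\<lambda>s. m powr P + P * m powr (P - 1) * (g s - m)) =
         h * m powr P + P * m powr (P - 1) * (integral {a..a+h} g - h * m)"
    proof -
      have "integral {a..a+h} (\<lambda>s. m powr P + P * m powr (P - 1) * (g s - m)) =
          integral {a..a+h} (\<lambda>s. m powr P) + integral {a..a+h} (\<lambda>s. P * m powr (P - 1) * (g s - m))"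
        by (rule integral_add) (intro integrable_const_ivl cmi)+
      also have "integral {a..a+h} (\<lambda>s. P * m powr (P - 1) * (g s - m)) = P * m powr (P - 1) * integral {a..a+h} (\<lambda>s. g s - m)"
        by (rule integral_mult_right)
      also have "integral {a..a+h} (\<lambda>s. g s - m) = integral {a..a+h} g - integral {a..a+h} (\<lambda>s. m)"
        by (rule integral_diff) (intro integrable_const_ivl gi)+
      finally show ?thesis using h by simp
    qed
    also have "integral {a..a+h} g - h * m = 0" unfolding m_def using h by simp
    finally have hm: "h * m powr P \<le> integral {a..a+h} (\<lambda>s. g s powr P)" by simp
    have "(integral {a..a+h} g) powr P = (h * m) powr P" unfolding m_def using h by simp
    also have "\<dots> = h powr (P - 1) * (h * m powr P)"
      using h m0 by (simp add: powr_mult powr_diff)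
    also have "\<dots> \<le> h powr (P - 1) * integral {a..a+h} (\<lambda>s. g s powr P)"
      using hm by (intro mult_left_mono) auto
    finally show ?thesis .
  qed
qed

lemma integral_sum_intervals:
  fixes g :: "real \<Rightarrow> 'a::banach"
  assumes gi: "\<And>b. g integrable_on {0..b}" and h: "h \<ge> 0"
  shows "integral {0..real N * h} g = (\<Sum>n<N. integral {real n * h..real n * h + h} g)"
proof (induction N)
  case 0 then show ?case by simp
next
  case (Suc N)
  have "integral {0..real N * h} g + integral {real N * h..real (Suc N) * h} g = integral {0..real (Suc N) * h} g"
    by (rule Henstock_Kurzweil_Integration.integral_combine) (use h gi in \<open>auto simp: distrib_right\<close>)
  then show ?case using Suc by (simp add: distrib_right add.commute)
qed

lemma space_lebesgue_on[simp]: "space (lebesgue_on S) = S" by simp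

lemma hk_to_leb:
  fixes g :: "real \<Rightarrow> real"
  assumes gi: "g integrable_on {a..b}" and g0: "\<And>s. s \<in> {a..b} \<Longrightarrow> 0 \<le> g s"
  shows "integrable (lebesgue_on {a..b}) g"
    and "(\<integral>\<^sup>+s. ennreal (g s) \<partial>lebesgue_on {a..b}) = ennreal (integral {a..b} g)"
proof -
  have "g absolutely_integrable_on {a..b}" by (rule nonnegative_absolutely_integrable_1[OF gi g0])
  then show li: "integrable (lebesgue_on {a..b}) g"
    by (rule absolutely_integrable_imp_integrable) simp
  have "(\<integral>\<^sup>+s. ennreal (g s) \<partial>lebesgue_on {a..b}) = ennreal (integral\<^sup>L (lebesgue_on {a..b}) g)"
    by (rule nn_integral_eq_integral[OF li]) (auto intro!: AE_I2 g0)
  also have "integral\<^sup>L (lebesgue_on {a..b}) g = integral {a..b} g"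
    by (rule lebesgue_integral_eq_integral[OF li]) simp
  finally show "(\<integral>\<^sup>+s. ennreal (g s) \<partial>lebesgue_on {a..b}) = ennreal (integral {a..b} g)" .
qed

lemma leb_to_hk:
  fixes g :: "real \<Rightarrow> real"
  assumes gm: "g \<in> borel_measurable (lebesgue_on {a..b})" and g0: "\<And>s. s \<in> {a..b} \<Longrightarrow> 0 \<le> g s"
    and fin: "(\<integral>\<^sup>+s. ennreal (g s) \<partial>lebesgue_on {a..b}) < \<infinity>"
  shows "g integrable_on {a..b}"
    and "(\<integral>\<^sup>+s. ennreal (g s) \<partial>lebesgue_on {a..b}) = ennreal (integral {a..b} g)"
proof -
  have li: "integrable (lebesgue_on {a..b}) g"
    by (rule integrableI_nonneg[OF gm _ fin]) (auto intro!: AE_I2 g0)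
  show gi: "g integrable_on {a..b}" by (rule integrable_on_lebesgue_on[OF li]) simp
  show "(\<integral>\<^sup>+s. ennreal (g s) \<partial>lebesgue_on {a..b}) = ennreal (integral {a..b} g)"
    by (rule hk_to_leb(2)[OF gi g0])
qed

lemma nn_mono_set:
  assumes "A \<subseteq> B" "A \<in> sets lebesgue" "B \<in> sets lebesgue"
  shows "(\<integral>\<^sup>+s. f s \<partial>lebesgue_on A) \<le> (\<integral>\<^sup>+s. f s \<partial>lebesgue_on B)"
  using assms by (auto simp: nn_integral_restrict_space intro!: nn_integral_mono split: split_indicator)

lemma le_one_plus_powr:
  fixes x P :: real
  assumes "x \<ge> 0" "P \<ge> 1"
  shows "x \<le> 1 + x powr P"
proof (cases "x \<le> 1")
  case True then show ?thesis by (smt (verit) powr_ge_zero)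
next
  case False
  then have "x powr 1 \<le> x powr P" using assms by (intro powr_mono) auto
  then show ?thesis using assms by simp
qed

lemma Lp_meas:
  fixes u :: "real \<Rightarrow> 'a::real_normed_vector"
  assumes "u \<in> Lp p"
  shows "(\<lambda>s. norm (u s)) \<in> borel_measurable (lebesgue_on {0..})"
  using assms unfolding Lp_def by (auto intro: measurable_compose[OF _ borel_measurable_norm])

lemma Lp_fin_basic:
  fixes u :: "real \<Rightarrow> 'a::real_normed_vector"
  assumes u: "u \<in> Lp p" and p1: "1 \<le> p" and pinf: "p \<noteq> \<infinity>"
  shows "enn2real p \<ge> 1"
    and "(\<integral>\<^sup>+t. ennreal (norm (u t) powr enn2real p) \<partial>lebesgue_on {0..}) < \<infinity>"
    and "Lp_norm p u = ennreal (enn2real (\<integral>\<^sup>+t. ennreal (norm (u t) powr enn2real p) \<partial>lebesgue_on {0..}) powr (1 / enn2real p))"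
proof -
  show "enn2real p \<ge> 1" using enn2real_mono[OF p1] pinf by (simp add: top.not_eq_extremum)
  have "Lp_norm p u < \<infinity>" using u unfolding Lp_def by auto
  then show fin: "(\<integral>\<^sup>+t. ennreal (norm (u t) powr enn2real p) \<partial>lebesgue_on {0..}) < \<infinity>"
    unfolding Lp_norm_def using pinf by (auto simp: Let_def top.not_eq_extremum split: if_splits)
  then show "Lp_norm p u = ennreal (enn2real (\<integral>\<^sup>+t. ennreal (norm (u t) powr enn2real p) \<partial>lebesgue_on {0..}) powr (1 / enn2real p))"
    unfolding Lp_norm_def using pinf by (simp add: Let_def)
qed

lemma Lp_fin_interval:
  fixes u :: "real \<Rightarrow> 'a::real_normed_vector"
  assumes um: "(\<lambda>s. norm (u s)) \<in> borel_measurable (lebesgue_on {0..})" and P: "P \<ge> 1"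
    and fin: "(\<integral>\<^sup>+t. ennreal (norm (u t) powr P) \<partial>lebesgue_on {0..}) < \<infinity>"
    and a: "0 \<le> a"
  shows "(\<lambda>s. norm (u s) powr P) integrable_on {a..b}"
    and "integral {a..b} (\<lambda>s. norm (u s) powr P) \<le> enn2real (\<integral>\<^sup>+t. ennreal (norm (u t) powr P) \<partial>lebesgue_on {0..})"
    and "(\<lambda>s. norm (u s)) integrable_on {a..b}"
proof -
  have sub: "{a..b} \<subseteq> {0..}" using a by auto
  have um': "(\<lambda>s. norm (u s)) \<in> borel_measurable (lebesgue_on {a..b})"
    by (rule measurable_restrict_mono[OF um sub])
  have Fm: "(\<lambda>s. norm (u s) powr P) \<in> borel_measurable (lebesgue_on {a..b})"
    by (intro powr_real_measurable um' borel_measurable_const)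
  have le: "(\<integral>\<^sup>+t. ennreal (norm (u t) powr P) \<partial>lebesgue_on {a..b}) \<le> (\<integral>\<^sup>+t. ennreal (norm (u t) powr P) \<partial>lebesgue_on {0..})"
    by (rule nn_mono_set[OF sub]) auto
  then have fin': "(\<integral>\<^sup>+t. ennreal (norm (u t) powr P) \<partial>lebesgue_on {a..b}) < \<infinity>" using fin by simp
  show Fi: "(\<lambda>s. norm (u s) powr P) integrable_on {a..b}"
    by (rule leb_to_hk(1)[OF Fm _ fin']) auto
  have "ennreal (integral {a..b} (\<lambda>s. norm (u s) powr P)) \<le> (\<integral>\<^sup>+t. ennreal (norm (u t) powr P) \<partial>lebesgue_on {0..})"
    using leb_to_hk(2)[OF Fm _ fin'] le by simp
  then show "integral {a..b} (\<lambda>s. norm (u s) powr P) \<le> enn2real (\<integral>\<^sup>+t. ennreal (norm (u t) powr P) \<partial>lebesgue_on {0..})"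
  proof -
    let ?I = "(\<integral>\<^sup>+t. ennreal (norm (u t) powr P) \<partial>lebesgue_on {0..})"
    assume A: "ennreal (integral {a..b} (\<lambda>s. norm (u s) powr P)) \<le> ?I"
    have "?I = ennreal (enn2real ?I)" using fin by (simp add: ennreal_enn2real less_top)
    then have "ennreal (integral {a..b} (\<lambda>s. norm (u s) powr P)) \<le> ennreal (enn2real ?I)" using A by simp
    then show ?thesis by (simp add: ennreal_le_iff)
  qed
  have "(\<lambda>s. 1 + norm (u s) powr P) integrable_on {a..b}" by (intro integrable_add integrable_const_ivl Fi)
  then have li: "integrable (lebesgue_on {a..b}) (\<lambda>s. 1 + norm (u s) powr P)"
    by (rule hk_to_leb(1)) auto
  have "integrable (lebesgue_on {a..b}) (\<lambda>s. norm (u s))"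
    by (rule Bochner_Integration.integrable_bound[OF li um']) (auto intro!: AE_I2 le_one_plus_powr P)
  then show "(\<lambda>s. norm (u s)) integrable_on {a..b}"
    by (rule integrable_on_lebesgue_on) simp
qed

lemma Linf_facts:
  fixes u :: "real \<Rightarrow> 'a::real_normed_vector"
  assumes u: "u \<in> Lp \<infinity>"
  defines "E \<equiv> enn2real (Lp_norm \<infinity> u)"
  shows "Lp_norm \<infinity> u = ennreal E"
    and "AE s in lebesgue_on {0..}. norm (u s) \<le> E"
    and "\<And>a b. 0 \<le> a \<Longrightarrow> (\<lambda>s. norm (u s)) integrable_on {a..b}"
    and "\<And>a b. 0 \<le> a \<Longrightarrow> a \<le> b \<Longrightarrow> integral {a..b} (\<lambda>s. norm (u s)) \<le> (b - a) * E"
proof -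
  have um: "(\<lambda>s. norm (u s)) \<in> borel_measurable (lebesgue_on {0..})" by (rule Lp_meas[OF u])
  have fin: "Lp_norm \<infinity> u < \<infinity>" using u unfolding Lp_def by auto
  then show eq: "Lp_norm \<infinity> u = ennreal E" unfolding E_def by (simp add: less_top)
  have E0: "E \<ge> 0" unfolding E_def by simp
  have "AE s in lebesgue_on {0..}. ennreal (norm (u s)) \<le> ennreal E"
    using esssup_AE[of "\<lambda>t. ennreal (norm (u t))" "lebesgue_on {0..}"] eq unfolding Lp_norm_def by simp
  then show AEb: "AE s in lebesgue_on {0..}. norm (u s) \<le> E"
    by eventually_elim (use E0 in simp)
  have AEb': "AE s in lebesgue_on {a..b}. norm (u s) \<le> E" if a: "0 \<le> a" for a b
  proof -
    have "AE s in lebesgue. s \<in> {0..} \<longrightarrow> norm (u s) \<le> E"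
      using AEb by (subst (asm) AE_restrict_space_iff) auto
    then have "AE s in lebesgue. s \<in> {a..b} \<longrightarrow> norm (u s) \<le> E"
      by eventually_elim (use a in auto)
    then show ?thesis by (subst AE_restrict_space_iff) auto
  qed
  have li: "integrable (lebesgue_on {a..b}) (\<lambda>s. norm (u s))"
    and ci: "integrable (lebesgue_on {a..b}) (\<lambda>s. E)" if a: "0 \<le> a" for a b
  proof -
    show ci: "integrable (lebesgue_on {a..b}) (\<lambda>s. E)"
      by (rule hk_to_leb(1)[OF integrable_const_ivl]) (use E0 in auto)
    show "integrable (lebesgue_on {a..b}) (\<lambda>s. norm (u s))"
      by (rule Bochner_Integration.integrable_bound[OF ci measurable_restrict_mono[OF um]])
        (use a AEb'[OF a, of b] E0 in auto)
  qed
  show "(\<lambda>s. norm (u s)) integrable_on {a..b}" if "0 \<le> a" for a b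
    by (rule integrable_on_lebesgue_on[OF li[OF that]]) simp
  show "integral {a..b} (\<lambda>s. norm (u s)) \<le> (b - a) * E" if ab: "0 \<le> a" "a \<le> b" for a b
  proof -
    have "integral {a..b} (\<lambda>s. norm (u s)) = integral\<^sup>L (lebesgue_on {a..b}) (\<lambda>s. norm (u s))"
      by (rule lebesgue_integral_eq_integral[OF li[OF ab(1)], symmetric]) simp
    also have "\<dots> \<le> integral\<^sup>L (lebesgue_on {a..b}) (\<lambda>s. E)"
      by (rule integral_mono_AE[OF li[OF ab(1)] ci[OF ab(1)] AEb'[OF ab(1)]])
    also have "\<dots> = integral {a..b} (\<lambda>s. E)"
      by (rule lebesgue_integral_eq_integral[OF ci[OF ab(1)]]) simp
    also have "\<dots> = (b - a) * E" using ab by simp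
    finally show ?thesis .
  qed
qed

lemma nn_halfline_bound:
  fixes G :: "real \<Rightarrow> real"
  assumes Gc: "continuous_on {0..} G" and G0: "\<And>t. 0 \<le> t \<Longrightarrow> 0 \<le> G t" and h: "h > 0"
    and R: "\<And>N. integral {0..real N * h} G \<le> R"
  shows "(\<integral>\<^sup>+t. ennreal (G t) \<partial>lebesgue_on {0..}) \<le> ennreal R"
proof -
  define F where "F N t = ennreal (G t) * indicator {0..real N * h} t" for N t
  have sup: "(SUP N. F N t) = ennreal (G t)" if t: "t \<in> {0..}" for t
  proof (rule antisym)
    show "(SUP N. F N t) \<le> ennreal (G t)"
      unfolding F_def by (intro SUP_least) (auto split: split_indicator)
    obtain N :: nat where "t / h \<le> real N" using real_arch_simple by blast
    then have "t \<le> real N * h" using h by (simp add: field_simps)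
    then have "F N t = ennreal (G t)" unfolding F_def using t by simp
    then show "ennreal (G t) \<le> (SUP N. F N t)" by (metis SUP_upper UNIV_I)
  qed
  have "(\<integral>\<^sup>+t. ennreal (G t) \<partial>lebesgue_on {0..}) = (\<integral>\<^sup>+t. (SUP N. F N t) \<partial>lebesgue_on {0..})"
    by (rule nn_integral_cong) (simp add: sup)
  also have "\<dots> = (SUP N. \<integral>\<^sup>+t. F N t \<partial>lebesgue_on {0..})"
  proof (rule nn_integral_monotone_convergence_SUP)
    show "incseq F"
      unfolding F_def incseq_def le_fun_def using h
      by (auto split: split_indicator intro: order_trans mult_right_mono)
    fix N
    have "(\<lambda>t. ennreal (G t)) \<in> borel_measurable (lebesgue_on {0..})"
      by (intro measurable_compose[OF continuous_imp_measurable_on_sets_lebesgue[OF Gc]] measurable_ennreal) simp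
    moreover have "{0..real N * h} \<in> sets (lebesgue_on {0..})"
      by (simp add: sets_restrict_space_iff)
    ultimately show "F N \<in> borel_measurable (lebesgue_on {0..})"
      unfolding F_def by (intro borel_measurable_times_ennreal borel_measurable_indicator)
  qed
  also have "\<dots> \<le> ennreal R"
  proof (rule SUP_least)
    fix N
    have "(\<integral>\<^sup>+t. F N t \<partial>lebesgue_on {0..}) = (\<integral>\<^sup>+t. ennreal (G t) \<partial>lebesgue_on {0..real N * h})"
      unfolding F_def using h
      by (auto simp: nn_integral_restrict_space intro!: nn_integral_cong split: split_indicator)
    also have "\<dots> = ennreal (integral {0..real N * h} G)"
    proof (rule hk_to_leb(2))
      show "G integrable_on {0..real N * h}"
        by (rule integrable_continuous_interval, rule continuous_on_subset[OF Gc]) auto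
    qed (auto intro: G0)
    also have "\<dots> \<le> ennreal R" using R by (rule ennreal_leI)
    finally show "(\<integral>\<^sup>+t. F N t \<partial>lebesgue_on {0..}) \<le> ennreal R" .
  qed
  finally show ?thesis .
qed

context sys begin

lemma mild_zero_init:
  assumes "mild_solution T f \<sigma> u 0 \<phi>"
  shows "\<phi> 0 = 0"
proof -
  have "((\<lambda>s. T (0 - s) (f (\<sigma> s) (\<phi> s) (u s))) has_integral (\<phi> 0 - T 0 0)) {0..0}"
    using assms unfolding mild_solution_def by auto
  moreover have "((\<lambda>s. T (0 - s) (f (\<sigma> s) (\<phi> s) (u s))) has_integral 0) {0..(0::real)}"
    using has_integral_refl(1)[of _ "0::real"] by (simp add: cbox_interval)
  ultimately have "\<phi> 0 - T 0 0 = 0" by (rule has_integral_unique)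
  then show ?thesis by simp
qed

lemma pointwise:
  fixes e b :: "nat \<Rightarrow> real"
  assumes uges: "\<forall>\<sigma>\<in>PC. \<forall>x \<psi>. mild_solution T f \<sigma> (\<lambda>_. 0) x \<psi> \<longrightarrow>
            (\<forall>t\<ge>0. norm (\<psi> t) \<le> M * exp (- lam * t) * norm x)"
    and M: "M > 0" and h: "h > 0" and hM: "M * exp (- lam * h) \<le> 1/2" and lam: "lam > 0"
    and \<sigma>: "\<sigma> \<in> PC" and m: "mild_solution T f \<sigma> u 0 \<phi>"
    and ui: "\<And>a b. 0 \<le> a \<Longrightarrow> (\<lambda>s. norm (u s)) integrable_on {a..b}"
    and bdef: "\<And>n. b n = integral {real n * h..real n * h + h} (\<lambda>s. norm (u s))"
    and e0: "e 0 = 0" and eS: "\<And>n. e (Suc n) = e n / 2 + b n"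
    and t: "t \<in> {real n * h..real n * h + h}"
  shows "norm (\<phi> t) \<le> 2 * (2 * (K * exp (\<omega> * h) * L) * exp (2 * (K * exp (\<omega> * h) * L) * h)) * (M + 1) * e (Suc n)"
proof -
  define Cs where "Cs = 2 * (K * exp (\<omega> * h) * L) * exp (2 * (K * exp (\<omega> * h) * L) * h)"
  have Cs0: "Cs \<ge> 0" unfolding Cs_def using K1 L_pos by simp
  define a where "a n = norm (\<phi> (real n * h))" for n
  have b0: "b n \<ge> 0" for n unfolding bdef by (rule integral_nonneg[OF ui]) (use h in auto)
  have e0': "e n \<ge> 0" for n by (induction n) (auto simp: e0 eS b0)
  have J: "norm (\<phi> (real n * h + \<tau>)) \<le> M * exp (- lam * \<tau>) * a n + Cs * b n" if "\<tau> \<in> {0..h}" for n \<tau>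
    unfolding a_def Cs_def bdef
    by (rule step[OF uges \<sigma> m _ _ ui that]) (use h in auto)
  have aS: "a (Suc n) \<le> a n / 2 + Cs * b n" for n
  proof -
    have "a (Suc n) = norm (\<phi> (real n * h + h))" unfolding a_def by (simp add: distrib_right add.commute)
    also have "\<dots> \<le> M * exp (- lam * h) * a n + Cs * b n" using J[of h n] h by simp
    also have "M * exp (- lam * h) * a n \<le> 1/2 * a n" using hM unfolding a_def by (intro mult_right_mono) auto
    finally show ?thesis by simp
  qed
  have ae: "a n \<le> Cs * e n" for n
  proof (induction n)
    case 0 then show ?case using mild_zero_init[OF m] unfolding a_def by (simp add: e0)
  next
    case (Suc n)
    have "a (Suc n) \<le> a n / 2 + Cs * b n" by (rule aS)
    also have "\<dots> \<le> Cs * e n / 2 + Cs * b n" using Suc by simp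
    also have "\<dots> = Cs * e (Suc n)" by (simp add: eS algebra_simps)
    finally show ?case .
  qed
  define \<tau> where "\<tau> = t - real n * h"
  have \<tau>: "\<tau> \<in> {0..h}" using t unfolding \<tau>_def by auto
  have "norm (\<phi> t) \<le> M * exp (- lam * \<tau>) * a n + Cs * b n" using J[OF \<tau>, of n] unfolding \<tau>_def by simp
  also have "M * exp (- lam * \<tau>) * a n \<le> M * 1 * (Cs * e n)"
    using M lam \<tau> ae[of n] unfolding a_def by (intro mult_mono) auto
  also have "M * 1 * (Cs * e n) + Cs * b n \<le> 2 * Cs * (M + 1) * e (Suc n)"
  proof -
    have "2 * Cs * (M + 1) * e (Suc n) = Cs * (M + 1) * e n + 2 * Cs * (M + 1) * b n"
      by (simp add: eS algebra_simps)
    moreover have "M * Cs * e n \<le> Cs * (M + 1) * e n" using Cs0 e0'[of n] by (simp add: mult_right_mono algebra_simps)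
    moreover have "Cs * b n \<le> 2 * Cs * (M + 1) * b n"
    proof -
      have "Cs * b n * 1 \<le> Cs * b n * (2 * (M + 1))" using Cs0 b0[of n] M by (intro mult_left_mono) auto
      then show ?thesis by (simp add: algebra_simps)
    qed
    ultimately show ?thesis by simp
  qed
  finally show ?thesis unfolding Cs_def by simp
qed

end

theorem theorem9:
  fixes T :: "real \<Rightarrow> ('x::banach \<Rightarrow>\<^sub>L 'x)"
    and f :: "'q \<Rightarrow> 'x \<Rightarrow> 'u::banach \<Rightarrow> 'x"
    and L :: real
  assumes semigroup: "C0_semigroup T"
    and L_pos: "L > 0"
    and lipschitz: "\<And>q. L-lipschitz_on UNIV (\<lambda>(x, v). f q x v)"
    and f_zero: "\<And>q. f q 0 0 = 0"
    and uges: "UGES T f"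
  shows "\<forall>p::ennreal. 1 \<le> p \<longrightarrow>
           (\<exists>c>0. \<forall>\<sigma>\<in>PC. \<forall>u\<in>Lp p. \<forall>\<phi>. mild_solution T f \<sigma> u 0 \<phi> \<longrightarrow>
               \<phi> \<in> Lp p \<and> Lp_norm p \<phi> \<le> ennreal c * Lp_norm p u)"
proof -
  obtain K \<omega> where K\<omega>: "K \<ge> 1" "\<omega> \<ge> 0" "\<forall>t\<ge>0. norm (T t) \<le> K * exp (\<omega> * t)"
    using sg_exp_bound[OF semigroup] by blast
  interpret sys T K \<omega> f L
    by unfold_locales (use semigroup K\<omega> L_pos lipschitz f_zero in auto)
  obtain M lam where M: "M > 0" and lam: "lam > 0" and U: "\<forall>\<sigma>\<in>PC. \<forall>x \<psi>. mild_solution T f \<sigma> (\<lambda>_. 0) x \<psi> \<longrightarrow>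
            (\<forall>t\<ge>0. norm (\<psi> t) \<le> M * exp (- lam * t) * norm x)"
    using uges unfolding UGES_def by blast
  define h where "h = max 1 (ln (2 * M) / lam)"
  have h0: "h > 0" unfolding h_def by simp
  have hM: "M * exp (- lam * h) \<le> 1/2"
  proof -
    have "ln (2 * M) / lam \<le> h" unfolding h_def by simp
    then have "lam * (ln (2 * M) / lam) \<le> lam * h" using lam by (intro mult_left_mono) auto
    then have "ln (2 * M) \<le> lam * h" using lam by simp
    then have "exp (- lam * h) \<le> exp (- ln (2 * M))" by simp
    also have "\<dots> = 1 / (2 * M)" using M by (simp add: exp_minus inverse_eq_divide)
    finally have "M * exp (- lam * h) \<le> M * (1 / (2 * M))" using M by (intro mult_left_mono) auto
    then show ?thesis using M by simp
  qed
  define Cs where "Cs = 2 * (K * exp (\<omega> * h) * L) * exp (2 * (K * exp (\<omega> * h) * L) * h)"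
  define W where "W = 2 * Cs * (M + 1)"
  have W0: "W \<ge> 0" unfolding W_def Cs_def using K1 L_pos M by simp
  define c where "c = 2 * W * h + 1"
  have c0: "c > 0" unfolding c_def using W0 h0 by (simp add: add_nonneg_pos)
  show ?thesis
  proof (intro allI impI)
    fix p :: ennreal assume p1: "1 \<le> p"
    show "\<exists>c>0. \<forall>\<sigma>\<in>PC. \<forall>u\<in>Lp p. \<forall>\<phi>. mild_solution T f \<sigma> u 0 \<phi> \<longrightarrow>
               \<phi> \<in> Lp p \<and> Lp_norm p \<phi> \<le> ennreal c * Lp_norm p u"
    proof (rule exI[of _ c], rule conjI[OF c0], intro ballI allI impI)
      fix \<sigma> u \<phi> assume \<sigma>: "\<sigma> \<in> PC" and u: "u \<in> Lp p" and m: "mild_solution T f \<sigma> u 0 \<phi>"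
      define b where "b n = integral {real n * h..real n * h + h} (\<lambda>s. norm (u s))" for n
      define e where "e = rec_nat 0 (\<lambda>n x. x / 2 + b n)"
      have e0: "e 0 = 0" and eS: "\<And>n. e (Suc n) = e n / 2 + b n" by (simp_all add: e_def)
      have \<phi>c: "continuous_on {0..} \<phi>" using m unfolding mild_solution_def by auto
      have \<phi>m: "\<phi> \<in> borel_measurable (lebesgue_on {0..})"
        by (rule continuous_imp_measurable_on_sets_lebesgue[OF \<phi>c]) simp
      have cover: "\<exists>n. t \<in> {real n * h..real n * h + h}" if t: "0 \<le> t" for t
      proof (intro exI[of _ "nat \<lfloor>t / h\<rfloor>"])
        have "real (nat \<lfloor>t / h\<rfloor>) \<le> t / h" "t / h \<le> real (nat \<lfloor>t / h\<rfloor>) + 1"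
        proof -
          have x0: "0 \<le> t / h" using t h0 by simp
          have eq: "real (nat \<lfloor>t / h\<rfloor>) = real_of_int \<lfloor>t / h\<rfloor>" using x0 by simp
          show "real (nat \<lfloor>t / h\<rfloor>) \<le> t / h" "t / h \<le> real (nat \<lfloor>t / h\<rfloor>) + 1"
            unfolding eq using of_int_floor_le[of "t / h"] real_of_int_floor_add_one_ge[of "t / h"] by linarith+
        qed
        then show "t \<in> {real (nat \<lfloor>t / h\<rfloor>) * h..real (nat \<lfloor>t / h\<rfloor>) * h + h}"
          using h0 by (auto simp: field_simps)
      qed
      have PW: "norm (\<phi> t) \<le> W * e (Suc n)"
        if ui: "\<And>a b. 0 \<le> a \<Longrightarrow> (\<lambda>s. norm (u s)) integrable_on {a..b}"
          and t: "t \<in> {real n * h..real n * h + h}" for n t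
        unfolding W_def Cs_def
        by (rule pointwise[OF U M h0 hM lam \<sigma> m ui b_def e0 eS t])
      show "\<phi> \<in> Lp p \<and> Lp_norm p \<phi> \<le> ennreal c * Lp_norm p u"
      proof (cases "p = \<infinity>")
        case True
        have u': "u \<in> Lp \<infinity>" using u True by simp
        define E where "E = enn2real (Lp_norm \<infinity> u)"
        have E0: "E \<ge> 0" unfolding E_def by simp
        note LF = Linf_facts[OF u', folded E_def]
        have bE: "b n \<le> h * E" for n
          using LF(4)[of "real n * h" "real n * h + h"] h0 unfolding b_def by simp
        have eE: "e n \<le> 2 * h * E" for n
        proof (induction n)
          case 0 then show ?case using e0 h0 E0 by simp
        next
          case (Suc n) then show ?case using bE[of n] by (simp add: eS)
        qed
        have pt: "norm (\<phi> t) \<le> W * (2 * h * E)" if t: "t \<in> {0..}" for t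
        proof -
          obtain n where n: "t \<in> {real n * h..real n * h + h}" using cover t by auto
          have "norm (\<phi> t) \<le> W * e (Suc n)" by (rule PW[OF LF(3) n])
          also have "\<dots> \<le> W * (2 * h * E)" using W0 eE by (intro mult_left_mono) auto
          finally show ?thesis .
        qed
        have nm: "(\<lambda>t. ennreal (norm (\<phi> t))) \<in> borel_measurable (lebesgue_on {0..})"
          using \<phi>m by measurable
        have "Lp_norm p \<phi> = esssup (lebesgue_on {0..}) (\<lambda>t. ennreal (norm (\<phi> t)))"
          unfolding Lp_norm_def using True by simp
        also have "\<dots> \<le> ennreal (W * (2 * h * E))"
          by (rule esssup_I[OF nm]) (auto intro!: AE_I2 ennreal_leI pt)
        also have "\<dots> \<le> ennreal (c * E)"
          using W0 h0 E0 unfolding c_def by (intro ennreal_leI) (simp add: algebra_simps mult_right_mono)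
        also have ceq: "ennreal (c * E) = ennreal c * Lp_norm p u"
          using LF(1) True c0 E0 by (simp add: ennreal_mult)
        finally have le: "Lp_norm p \<phi> \<le> ennreal c * Lp_norm p u" .
        have "Lp_norm p \<phi> < \<infinity>"
          using le unfolding ceq[symmetric] by (rule order_le_less_trans) simp
        then show ?thesis using le \<phi>m unfolding Lp_def by auto
      next
        case False
        define P where "P = enn2real p"
        define I where "I = (\<integral>\<^sup>+t. ennreal (norm (u t) powr P) \<partial>lebesgue_on {0..})"
        define IU where "IU = enn2real I"
        note FB = Lp_fin_basic[OF u p1 False, folded P_def, folded I_def, folded IU_def]
        have P1: "P \<ge> 1" by (rule FB(1))
        have um: "(\<lambda>s. norm (u s)) \<in> borel_measurable (lebesgue_on {0..})" by (rule Lp_meas[OF u])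
        note FI = Lp_fin_interval[OF um P1 FB(2)[unfolded I_def], folded I_def IU_def]
        have ui: "\<And>a b. 0 \<le> a \<Longrightarrow> (\<lambda>s. norm (u s)) integrable_on {a..b}" by (rule FI(3))
        define B where "B n = integral {real n * h..real n * h + h} (\<lambda>s. norm (u s) powr P)" for n
        have b0: "b n \<ge> 0" for n unfolding b_def by (rule integral_nonneg[OF ui]) (use h0 in auto)
        have e0': "e n \<ge> 0" for n by (induction n) (auto simp: e0 eS b0)
        have jen: "b n powr P \<le> h powr (P - 1) * B n" for n
          unfolding b_def B_def by (rule jensen_interval[OF P1 h0]) (use FI(1) ui h0 in auto)
        have sumB: "(\<Sum>n<N. B n) \<le> IU" for N
        proof -
          have "(\<Sum>n<N. B n) = integral {0..real N * h} (\<lambda>s. norm (u s) powr P)"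
            unfolding B_def by (rule integral_sum_intervals[symmetric]) (use FI(1) h0 in auto)
          also have "\<dots> \<le> IU" by (rule FI(2)) simp
          finally show ?thesis .
        qed
        define G where "G t = norm (\<phi> t) powr P" for t
        have Gc: "continuous_on {0..} G" unfolding G_def
          by (intro continuous_on_powr' continuous_intros \<phi>c) (use P1 in auto)
        have G0: "0 \<le> G t" if "0 \<le> t" for t by (simp add: G_def)
        have Gi: "G integrable_on {a..b}" if "0 \<le> a" for a b
          by (rule integrable_continuous_interval, rule continuous_on_subset[OF Gc]) (use that in auto)
        have Gn: "integral {real n * h..real n * h + h} G \<le> h * (W * e (Suc n)) powr P" for n
        proof -
          have "integral {real n * h..real n * h + h} G \<le> integral {real n * h..real n * h + h} (\<lambda>_. (W * e (Suc n)) powr P)"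
          proof (rule integral_le[OF Gi integrable_const_ivl])
            show "0 \<le> real n * h" using h0 by simp
            fix t assume t: "t \<in> {real n * h..real n * h + h}"
            show "G t \<le> (W * e (Suc n)) powr P"
              unfolding G_def using P1 PW[OF ui t] by (intro powr_mono2) auto
          qed
          also have "\<dots> = h * (W * e (Suc n)) powr P" using h0 by simp
          finally show ?thesis .
        qed
        have hP: "h * W powr P * 2 powr P * h powr (P - 1) = (2 * W * h) powr P"
        proof -
          have "h * h powr (P - 1) = h powr P" using h0 by (simp add: powr_diff)
          then show ?thesis by (simp add: powr_mult algebra_simps)
        qed
        have sumG: "integral {0..real N * h} G \<le> (2 * W * h) powr P * IU" for N
        proof -
          have "integral {0..real N * h} G = (\<Sum>n<N. integral {real n * h..real n * h + h} G)"
            by (rule integral_sum_intervals) (use Gi h0 in auto)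
          also have "\<dots> \<le> (\<Sum>n<N. h * (W * e (Suc n)) powr P)" by (intro sum_mono Gn)
          also have "\<dots> = h * W powr P * (\<Sum>n<N. e (Suc n) powr P)"
            by (simp add: powr_mult sum_distrib_left mult.assoc)
          also have "\<dots> \<le> h * W powr P * (2 powr P * (\<Sum>n<N. b n powr P))"
            by (intro mult_left_mono disc_bound[OF P1 e0 eS b0]) (use h0 in auto)
          also have "\<dots> \<le> h * W powr P * (2 powr P * (\<Sum>n<N. h powr (P - 1) * B n))"
            by (intro mult_left_mono sum_mono jen) (use h0 in auto)
          also have "\<dots> = h * W powr P * 2 powr P * h powr (P - 1) * (\<Sum>n<N. B n)"
            by (simp add: sum_distrib_left mult.assoc)
          also have "\<dots> \<le> h * W powr P * 2 powr P * h powr (P - 1) * IU"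
            by (intro mult_left_mono sumB) (use h0 in auto)
          finally show ?thesis unfolding hP .
        qed
        have IU0: "IU \<ge> 0" unfolding IU_def by simp
        define R where "R = (2 * W * h) powr P * IU"
        have R0: "R \<ge> 0" unfolding R_def using IU0 by simp
        define J where "J = (\<integral>\<^sup>+t. ennreal (norm (\<phi> t) powr enn2real p) \<partial>lebesgue_on {0..})"
        have JR: "J \<le> ennreal R"
          unfolding J_def R_def P_def[symmetric] G_def[symmetric] by (rule nn_halfline_bound[OF Gc G0 h0 sumG])
        then have Jfin: "J \<noteq> \<infinity>" by (metis ennreal_less_top infinity_ennreal_def leD)
        have Lphi: "Lp_norm p \<phi> = ennreal (enn2real J powr (1 / P))"
          unfolding Lp_norm_def J_def[symmetric] using False Jfin by (simp add: Let_def P_def)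
        have "enn2real J \<le> R" using enn2real_mono[OF JR] R0 by simp
        then have "enn2real J powr (1 / P) \<le> R powr (1 / P)" using P1 by (intro powr_mono2) auto
        also have "R powr (1 / P) = (2 * W * h) * IU powr (1 / P)"
        proof -
          have "((2 * W * h) powr P) powr (1 / P) = 2 * W * h"
            using P1 W0 h0 by (simp add: powr_powr)
          then show ?thesis unfolding R_def by (simp add: powr_mult)
        qed
        also have "\<dots> \<le> c * IU powr (1 / P)" unfolding c_def by (intro mult_right_mono) auto
        finally have le0: "enn2real J powr (1 / P) \<le> c * IU powr (1 / P)" .
        have le: "Lp_norm p \<phi> \<le> ennreal c * Lp_norm p u"
          unfolding Lphi FB(3) using le0 c0 by (simp add: ennreal_mult[symmetric] ennreal_leI)
        have "Lp_norm p \<phi> < \<infinity>" unfolding Lphi by simp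
        then show ?thesis using le \<phi>m unfolding Lp_def by auto
      qed
    qed
  qed
qed


end
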